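(* Let $n\ge 1$, let $1\le k\le n$, and let $\tau\in\{0,1\}^n$ be a word with exactly $k$ letters equal to $1$. Let $\lambda(\tau)=(\lambda_1,\ldots,\lambda_k)$ be the partition associated to $\tau$, and set $\lambda_{k+1}=0$. Define $P(\tau)=\sum_T \mathrm{wt}(T)$, where the sum is over all Catalan tableaux $T$ of type $\tau$. Then \[ P(\tau)=\alpha^{k+\lambda_1}\beta^n\det A^{\alpha,\beta}_{\lambda(\tau)}, \] where $A^{\alpha,\beta}_{\lambda(\tau)}=(A_{ij})_{1\le i,j\le k}$ is the $k\times k$ matrix with entries \[ A_{ij}=\left(\binom{\lambda_{j+1}}{j-i+1}+\frac{1}{\beta}\binom{\lambda_{j+1}}{j-i}\right)+\sum_{p=1}^{\lambda_j-\lambda_{j+1}}\left(\frac{1}{\alpha}\right)^p\left(\binom{\lambda_{j+1}+p-1}{j-i}+\frac{1}{\beta}\binom{\lambda_{j+1}+p-1}{j-i-1}\right). \]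
   Context: $\alpha,\beta$ are indeterminates (or nonzero reals). Binomial coefficients satisfy $\binom{m}{r}=0$ if $r<0$ or $r>m$, and $\binom{m}{0}=1$; an empty sum is $0$. Partition of a word: for $\tau\in\{0,1\}^n$ with $k$ ones, $\lambda(\tau)=(\lambda_1,\ldots,\lambda_k)$ where $\lambda_i$ is the total number of $0$'s occurring (anywhere) after the $i$-th $1$ of $\tau$; thus $n-k\ge\lambda_1\ge\cdots\ge\lambda_k\ge 0$. Catalan tableau: a Catalan (alternative) tableau of size $(n,k)$ is a Young diagram $Y$ contained in a $k\times(n-k)$ rectangle (k rows, $n-k$ columns), justified to the northwest (row $i$, counted from the top, consists of the leftmost $\lambda_i$ boxes of that row of the rectangle, with $\lambda_1\ge\cdots\ge\lambda_k\ge0$), together with a filling of the boxes of $Y$ with symbols $\alpha$ and $\beta$ (each box containing at most one symbol) such that: (i) every box of $Y$ in the same column and above a box containing $\alpha$ is empty; (ii) every box of $Y$ in the same row and to the left of a box containing $\beta$ is empty; (iii) every box of $Y$ that is neither above an $\alpha$ (in its column) nor to the left of a $\beta$ (in its row) contains an $\alpha$ or a $\beta$. The type of the tableau is the word in $\{0,1\}^n$ obtained by walking along the southeast border of $Y$ from the northeast corner to the southwest corner of the rectangle, writing $1$ for each south step and $0$ for each west step; equivalently, a Catalan tableau of type $\tau$ is one whose Young diagram has row lengths $\lambda(\tau)$ inside the $k\times(n-k)$ rectangle. Weight: an $\alpha$-free column is a column of the $k\times(n-k)$ rectangle containing no $\alpha$; a $\beta$-free row is a row of the rectangle containing no $\beta$.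 The weight of a Catalan tableau $T$ of size $(n,k)$ is $\mathrm{wt}(T)=(\alpha\beta)^n(1/\alpha)^{f_{\mathrm{col}}(T)}(1/\beta)^{f_{\mathrm{row}}(T)}$, where $f_{\mathrm{col}}(T)$ is the number of $\alpha$-free columns and $f_{\mathrm{row}}(T)$ the number of $\beta$-free rows. *)

theory Defs
  imports "Jordan_Normal_Form.Determinant"
begin

(* A word tau in {0,1}^n is a bool list; True = letter 1, False = letter 0. *)

definition num_ones :: "bool list \<Rightarrow> nat" where
  "num_ones \<tau> = length (filter id \<tau>)"

definition ones_pos :: "bool list \<Rightarrow> nat list" where
  "ones_pos \<tau> = filter (\<lambda>j. \<tau> ! j) [0..<length \<tau>]"

(* lam tau i = lambda_i for 1 <= i <= k (number of 0's after the i-th 1);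
   lam tau i = 0 otherwise (in particular lambda_{k+1} = 0). *)
definition lam :: "bool list \<Rightarrow> nat \<Rightarrow> nat" where
  "lam \<tau> i = (if 1 \<le> i \<and> i \<le> num_ones \<tau>
      then length (filter Not (drop (ones_pos \<tau> ! (i - 1) + 1) \<tau>)) else 0)"

datatype sym = SA | SB

(* box (i,j) (row i, column j, 1-based) of the Young diagram of lambda(tau) *)
definition is_box :: "bool list \<Rightarrow> nat \<Rightarrow> nat \<Rightarrow> bool" where
  "is_box \<tau> i j \<longleftrightarrow> 1 \<le> i \<and> i \<le> num_ones \<tau> \<and> 1 \<le> j \<and> j \<le> lam \<tau> i"

definition catalan_tableau :: "bool list \<Rightarrow> (nat \<Rightarrow> nat \<Rightarrow> sym option) \<Rightarrow> bool" where
  "catalan_tableau \<tau> f \<longleftrightarrow>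
     (\<forall>i j. \<not> is_box \<tau> i j \<longrightarrow> f i j = None) \<and>
     (\<forall>i j i'. is_box \<tau> i j \<and> f i j = Some SA \<and> i' < i \<and> is_box \<tau> i' j \<longrightarrow> f i' j = None) \<and>
     (\<forall>i j j'. is_box \<tau> i j \<and> f i j = Some SB \<and> j' < j \<and> is_box \<tau> i j' \<longrightarrow> f i j' = None) \<and>
     (\<forall>i j. is_box \<tau> i j \<and>
        \<not> (\<exists>i'. i < i' \<and> is_box \<tau> i' j \<and> f i' j = Some SA) \<and>
        \<not> (\<exists>j'. j < j' \<and> is_box \<tau> i j' \<and> f i j' = Some SB) \<longrightarrow> f i j \<noteq> None)"

definition fcol :: "bool list \<Rightarrow> (nat \<Rightarrow> nat \<Rightarrow> sym option) \<Rightarrow> nat" where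
  "fcol \<tau> f = card {j \<in> {1..length \<tau> - num_ones \<tau>}. \<forall>i \<in> {1..num_ones \<tau>}. f i j \<noteq> Some SA}"

definition frow :: "bool list \<Rightarrow> (nat \<Rightarrow> nat \<Rightarrow> sym option) \<Rightarrow> nat" where
  "frow \<tau> f = card {i \<in> {1..num_ones \<tau>}. \<forall>j \<in> {1..length \<tau> - num_ones \<tau>}. f i j \<noteq> Some SB}"

definition wt :: "'a::field \<Rightarrow> 'a \<Rightarrow> bool list \<Rightarrow> (nat \<Rightarrow> nat \<Rightarrow> sym option) \<Rightarrow> 'a" where
  "wt \<alpha> \<beta> \<tau> f = (\<alpha> * \<beta>) ^ length \<tau> * (1 / \<alpha>) ^ fcol \<tau> f * (1 / \<beta>) ^ frow \<tau> f"

definition Ptau :: "'a::field \<Rightarrow> 'a \<Rightarrow> bool list \<Rightarrow> 'a" where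
  "Ptau \<alpha> \<beta> \<tau> = (\<Sum>f \<in> {f. catalan_tableau \<tau> f}. wt \<alpha> \<beta> \<tau> f)"

(* binomial coefficient with integer lower index: 0 if r < 0 or r > m *)
definition binz :: "nat \<Rightarrow> int \<Rightarrow> 'a::comm_ring_1" where
  "binz m r = (if r < 0 then 0 else of_nat (m choose nat r))"

(* entry A_{ij}, 1-based indices *)
definition Aent :: "'a::field \<Rightarrow> 'a \<Rightarrow> bool list \<Rightarrow> nat \<Rightarrow> nat \<Rightarrow> 'a" where
  "Aent \<alpha> \<beta> \<tau> i j =
     (binz (lam \<tau> (j+1)) (int j - int i + 1) + (1/\<beta>) * binz (lam \<tau> (j+1)) (int j - int i))
     + (\<Sum>p = 1..lam \<tau> j - lam \<tau> (j+1).
          (1/\<alpha>) ^ p * (binz (lam \<tau> (j+1) + p - 1) (int j - int i)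
                       + (1/\<beta>) * binz (lam \<tau> (j+1) + p - 1) (int j - int i - 1)))"

definition Amat :: "'a::field \<Rightarrow> 'a \<Rightarrow> bool list \<Rightarrow> 'a mat" where
  "Amat \<alpha> \<beta> \<tau> = mat (num_ones \<tau>) (num_ones \<tau>) (\<lambda>(i, j). Aent \<alpha> \<beta> \<tau> (i+1) (j+1))"

end

theory Submission
  imports Defs "HOL-Computational_Algebra.Formal_Power_Series"
begin

no_notation vec_index (infixl "$" 100)
notation fps_nth (infixl "$" 75)



definition hmat :: "nat \<Rightarrow> (nat \<Rightarrow> 'a::comm_ring_1 fps) \<Rightarrow> 'a mat" where
  "hmat k c = mat k k (\<lambda>(i,j). if i \<le> Suc j then c (Suc j) $ (Suc j - i) else 0)"

fun Tser :: "(nat \<Rightarrow> 'a::comm_ring_1 fps) \<Rightarrow> nat \<Rightarrow> 'a fps" where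
  "Tser c 0 = 1"
| "Tser c (Suc j) = Tser c j - fps_const ((c (Suc j) * Tser c j) $ Suc j) * fps_X ^ Suc j"

lemma Tser_deg: "j < i \<Longrightarrow> Tser c j $ i = 0"
  by (induction j) auto

lemma Tser_Suc_low: "i \<le> j \<Longrightarrow> Tser c (Suc j) $ i = Tser c j $ i"
  by auto

lemma Tser_cong: "(\<And>j. 1 \<le> j \<Longrightarrow> j \<le> k \<Longrightarrow> c j = c' j) \<Longrightarrow> Tser c k = Tser c' k"
  by (induction k) auto

lemma fps_decomp1: "(f::'a::comm_ring_1 fps) = fps_const (f$0) + fps_X * fps_shift 1 f"
  by (rule fps_ext) (auto)

lemma fps_mult_nth_Suc_shift:
  "((f::'a::comm_ring_1 fps) * g) $ Suc n = (fps_shift 1 f * g) $ n + f $ 0 * g $ Suc n"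
proof -
  have "f * g = fps_const (f$0) * g + fps_X * (fps_shift 1 f * g)"
    by (subst fps_decomp1[of f]) (simp add: algebra_simps)
  then show ?thesis by simp
qed

lemma hmat_carrier[simp]: "hmat k c \<in> carrier_mat k k" unfolding hmat_def by auto

lemma det_hmat_Suc:
  assumes "\<And>j. 1 \<le> j \<Longrightarrow> j \<le> k \<Longrightarrow> c j $ 0 = 1"
  shows "det (hmat (Suc k) c) = (-1)^k * (c (Suc k) * Tser c k) $ Suc k"
  using assms
proof (induction k arbitrary: c)
  case 0
  have "det (hmat 1 c) = hmat 1 c $$ (0,0)" by (rule det_single) auto
  then show ?case by (simp add: hmat_def)
next
  case (Suc k)
  let ?M = "hmat (Suc (Suc k)) c"
  define c' where "c' = c(Suc k := fps_shift 1 (c (Suc (Suc k))))"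
  have exp: "det ?M = (\<Sum>j<Suc (Suc k). ?M $$ (Suc k, j) * cofactor ?M (Suc k) j)"
    by (rule laplace_expansion_row) auto
  have "(\<Sum>j<Suc (Suc k). ?M $$ (Suc k, j) * cofactor ?M (Suc k) j)
      = (\<Sum>j\<in>{k, Suc k}. ?M $$ (Suc k, j) * cofactor ?M (Suc k) j)"
    by (rule sum.mono_neutral_right) (auto simp: hmat_def)
  also have "\<dots> = ?M $$ (Suc k, k) * cofactor ?M (Suc k) k + ?M $$ (Suc k, Suc k) * cofactor ?M (Suc k) (Suc k)"
    by simp
  finally have e1: "det ?M = ?M $$ (Suc k, k) * cofactor ?M (Suc k) k + ?M $$ (Suc k, Suc k) * cofactor ?M (Suc k) (Suc k)"
    using exp by simp
  have m1: "?M $$ (Suc k, k) = 1" using Suc.prems[of "Suc k"] by (simp add: hmat_def)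
  have m2: "?M $$ (Suc k, Suc k) = c (Suc (Suc k)) $ 1" by (simp add: hmat_def)
  have d1: "mat_delete ?M (Suc k) (Suc k) = hmat (Suc k) c"
    by (rule eq_matI) (auto simp: mat_delete_def hmat_def)
  have d2: "mat_delete ?M (Suc k) k = hmat (Suc k) c'"
    apply (rule eq_matI)
    apply (auto simp: mat_delete_def hmat_def c'_def Suc_diff_le)
    subgoal for i j by (subgoal_tac "j = k") auto
    done
  have cf1: "cofactor ?M (Suc k) (Suc k) = det (hmat (Suc k) c)"
    unfolding cofactor_def d1 by simp
  have cf2: "cofactor ?M (Suc k) k = - det (hmat (Suc k) c')"
    unfolding cofactor_def d2 by simp
  have IH1: "det (hmat (Suc k) c) = (-1)^k * (c (Suc k) * Tser c k) $ Suc k"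
    by (rule Suc.IH) (auto simp: Suc.prems)
  have IH2: "det (hmat (Suc k) c') = (-1)^k * (c' (Suc k) * Tser c' k) $ Suc k"
    by (rule Suc.IH) (auto simp: c'_def Suc.prems)
  have Tc: "Tser c' k = Tser c k" by (rule Tser_cong) (auto simp: c'_def)
  let ?T = "Tser c k"
  let ?e = "(c (Suc k) * ?T) $ Suc k"
  have TS: "Tser c (Suc k) = ?T - fps_const ?e * fps_X ^ Suc k" by simp
  have A: "(c (Suc (Suc k)) * ?T) $ Suc (Suc k) = (fps_shift 1 (c (Suc (Suc k))) * ?T) $ Suc k"
    using fps_mult_nth_Suc_shift[of "c (Suc (Suc k))" ?T "Suc k"] Tser_deg[of k "Suc (Suc k)" c] by simp
  have B: "(c (Suc (Suc k)) * (fps_const ?e * fps_X ^ Suc k)) $ Suc (Suc k) = ?e * c (Suc (Suc k)) $ 1"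
  proof -
    have "c (Suc (Suc k)) * (fps_const ?e * fps_X ^ Suc k) = fps_const ?e * (fps_X ^ Suc k * c (Suc (Suc k)))"
      by (simp add: algebra_simps)
    then have "(c (Suc (Suc k)) * (fps_const ?e * fps_X ^ Suc k)) $ Suc (Suc k)
       = ?e * (fps_X ^ Suc k * c (Suc (Suc k))) $ Suc (Suc k)"
      by (simp only: fps_mult_left_const_nth)
    also have "\<dots> = ?e * c (Suc (Suc k)) $ 1"
      by (simp only: fps_X_power_mult_nth) simp
    finally show ?thesis .
  qed
  have fin: "(c (Suc (Suc k)) * Tser c (Suc k)) $ Suc (Suc k)
      = (fps_shift 1 (c (Suc (Suc k))) * ?T) $ Suc k - ?e * c (Suc (Suc k)) $ 1"
    unfolding TS by (simp only: right_diff_distrib fps_sub_nth A B)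
  have c'k: "c' (Suc k) = fps_shift 1 (c (Suc (Suc k)))" by (simp add: c'_def)
  show ?case
    unfolding e1 m1 m2 cf1 cf2 IH1 IH2 Tc c'k fin by (simp del: Tser.simps add: algebra_simps)
qed

lemma coeff_agree:
  assumes "\<And>i. i < j \<Longrightarrow> A $ i = B $ i"
  shows "((c::'a::comm_ring_1 fps) * A) $ j = (c * B) $ j + c $ 0 * (A $ j - B $ j)"
proof -
  have "(c * A) $ j - (c * B) $ j = (\<Sum>i=0..j. c $ i * (A $ (j - i) - B $ (j - i)))"
    by (simp add: fps_mult_nth sum_subtractf[symmetric] right_diff_distrib)
  also have "\<dots> = (\<Sum>i\<in>{0}. c $ i * (A $ (j - i) - B $ (j - i)))"
    by (rule sum.mono_neutral_right) (auto simp: assms)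
  finally show ?thesis by (simp add: algebra_simps)
qed

lemma rowop:
  assumes R0: "R $ 0 = 1" and c0: "\<And>j. 1 \<le> j \<Longrightarrow> j \<le> k \<Longrightarrow> c j $ 0 = 1"
    and cc: "\<And>j. 1 \<le> j \<Longrightarrow> j \<le> k \<Longrightarrow> c' j = R * c j"
  shows "i \<le> k \<Longrightarrow> (R * Tser c' k) $ i = Tser c k $ i"
  using c0 cc
proof (induction k arbitrary: i)
  case 0
  then show ?case using R0 by simp
next
  case (Suc k)
  let ?T' = "Tser c' k" and ?T = "Tser c k"
  have IH: "\<And>i. i \<le> k \<Longrightarrow> (R * ?T') $ i = ?T $ i"
    using Suc.IH Suc.prems by auto
  define e' where "e' = (c' (Suc k) * ?T') $ Suc k"
  define e where "e = (c (Suc k) * ?T) $ Suc k"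
  have "e' = (c (Suc k) * (R * ?T')) $ Suc k"
    unfolding e'_def using Suc.prems(3)[of "Suc k"] by (simp add: algebra_simps)
  also have "\<dots> = e + (R * ?T') $ Suc k"
    unfolding e_def using coeff_agree[of "Suc k" "R * ?T'" ?T "c (Suc k)"] IH Suc.prems(2)[of "Suc k"]
      Tser_deg[of k "Suc k" c] by simp
  finally have ee: "e' = e + (R * ?T') $ Suc k" .
  have TS': "Tser c' (Suc k) = ?T' - fps_const e' * fps_X ^ Suc k" unfolding e'_def by simp
  have TS: "Tser c (Suc k) = ?T - fps_const e * fps_X ^ Suc k" unfolding e_def by simp
  have RX: "(R * (fps_const e' * fps_X ^ Suc k)) $ i = (if i < Suc k then 0 else e' * R $ (i - Suc k))"
  proof -
    have "R * (fps_const e' * fps_X ^ Suc k) = fps_const e' * (fps_X ^ Suc k * R)" by (simp add: algebra_simps)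
    then show ?thesis by (simp only: fps_mult_left_const_nth fps_X_power_mult_nth) simp
  qed
  have XX: "(fps_const e * fps_X ^ Suc k) $ i = (if i = Suc k then e else 0)"
    by (simp only: fps_mult_left_const_nth fps_X_power_nth) simp
  show ?case
  proof (cases "i \<le> k")
    case True
    then show ?thesis unfolding TS' TS right_diff_distrib fps_sub_nth RX XX using IH by simp
  next
    case False
    then have "i = Suc k" using Suc.prems(1) by simp
    then show ?thesis unfolding TS' TS right_diff_distrib fps_sub_nth RX XX using R0 ee
      Tser_deg[of k "Suc k" c] by simp
  qed
qed

lemma detR:
  fixes c c' :: "nat \<Rightarrow> 'a::field fps"
  assumes R0: "R $ 0 = 1" and c0: "\<And>j. 1 \<le> j \<Longrightarrow> j \<le> k \<Longrightarrow> c j $ 0 = 1"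
    and cc: "\<And>j. 1 \<le> j \<Longrightarrow> j \<le> k \<Longrightarrow> c' j = R * c j"
  shows "det (hmat (Suc k) c') = (-1)^k *
     ((inverse R * (c' (Suc k) - fps_const (c' (Suc k) $ 0))) * Tser c k) $ Suc k"
proof -
  define a where "a = c' (Suc k) $ 0"
  define h where "h = inverse R * (c' (Suc k) - fps_const a)"
  have c'0: "\<And>j. 1 \<le> j \<Longrightarrow> j \<le> k \<Longrightarrow> c' j $ 0 = 1" using c0 cc R0 by simp
  have L: "det (hmat (Suc k) c') = (-1)^k * (c' (Suc k) * Tser c' k) $ Suc k"
    by (rule det_hmat_Suc) (use c'0 in auto)
  have RinvR: "R * inverse R = 1" using R0 by (intro inverse_mult_eq_1') simp
  have ck: "c' (Suc k) = R * h + fps_const a"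
    unfolding h_def by (simp add: mult.assoc[symmetric] RinvR)
  have h0: "h $ 0 = 0" unfolding h_def a_def by simp
  have agree: "\<And>i. i < Suc k \<Longrightarrow> (R * Tser c' k) $ i = Tser c k $ i"
    using rowop[OF R0 c0 cc] by auto
  have "(c' (Suc k) * Tser c' k) $ Suc k = (h * (R * Tser c' k)) $ Suc k"
    unfolding ck using Tser_deg[of k "Suc k" c'] by (simp add: algebra_simps)
  also have "\<dots> = (h * Tser c k) $ Suc k"
    using coeff_agree[of "Suc k" "R * Tser c' k" "Tser c k" h] agree h0 by simp
  finally show ?thesis unfolding L h_def a_def by simp
qed



lemma binom_fps_nth: "((1 + fps_X) ^ m) $ r = (of_nat (m choose r) :: 'a::comm_ring_1)"
proof (induction m arbitrary: r)
  case 0 then show ?case by (cases r) auto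
next
  case (Suc m)
  have e: "(1 + fps_X) ^ Suc m = (1 + fps_X) * (1 + fps_X :: 'a fps) ^ m" by simp
  show ?case
    unfolding e fps_mult_fps_X_plus_1_nth by (cases r) (auto simp: Suc.IH)
qed

lemma bz_pos: "binz m (int r) = (of_nat (m choose r) :: 'a::comm_ring_1)"
  unfolding binz_def by simp

lemma bz_neg: "r < 0 \<Longrightarrow> binz m r = (0::'a::comm_ring_1)"
  unfolding binz_def by simp

lemma bxX_nth: fixes b :: "'a::comm_ring_1" shows "((1 + fps_const b * fps_X) * f) $ r = f $ r + (if r = 0 then 0 else b * f $ (r - 1))"
proof -
  have "(1 + fps_const b * fps_X) * f = f + fps_const b * (fps_X * f)" by (simp add: algebra_simps)
  then show ?thesis by simp
qed

lemma coeff1: fixes b :: "'a::comm_ring_1" shows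
  "((1 + fps_const b * fps_X) * (1 + fps_X) ^ m) $ r
   = binz m (int r) + b * binz m (int r - 1 :: int)"
  unfolding bxX_nth by (cases r) (auto simp: binz_def binom_fps_nth nat_add_distrib)

lemma coeff2: fixes b :: "'a::comm_ring_1" shows
  "(fps_X * ((1 + fps_const b * fps_X) * (1 + fps_X) ^ m)) $ r
   = binz m (int r - 1) + b * binz m (int r - 1 - 1 :: int)"
  by (cases r) (auto simp: coeff1 binz_def)

definition psi :: "'a::comm_ring_1 \<Rightarrow> nat \<Rightarrow> 'a fps" where
  "psi a d = 1 + fps_X * (\<Sum>p=1..d. fps_const (a^p) * (1 + fps_X)^(p - 1))"

definition colF :: "'a::field \<Rightarrow> 'a \<Rightarrow> bool list \<Rightarrow> nat \<Rightarrow> 'a fps" where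
  "colF \<alpha> \<beta> \<tau> j = (1 + fps_const (1/\<beta>) * fps_X) * (1 + fps_X)^(lam \<tau> (Suc j))
      * psi (1/\<alpha>) (lam \<tau> j - lam \<tau> (Suc j))"

lemma colF_expand:
  "(1 + fps_const b * fps_X) * (1 + fps_X)^m * psi a d
   = (1 + fps_const b * fps_X) * (1 + fps_X)^m
     + (\<Sum>p=1..d. fps_const (a^p) * (fps_X * ((1 + fps_const b * fps_X) * (1 + fps_X) ^ (m + p - 1))))"
proof -
  have "\<And>p. p \<in> {1..d} \<Longrightarrow> (1 + fps_const b * fps_X) * (1 + fps_X)^m * (fps_X * (fps_const (a^p) * (1 + fps_X)^(p - 1)))
     = fps_const (a^p) * (fps_X * ((1 + fps_const b * fps_X) * (1 + fps_X) ^ (m + p - 1)))"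
  proof -
    fix p assume "p \<in> {1..d}"
    then have "m + p - 1 = m + (p - 1)" by auto
    then show "?thesis p" by (simp add: power_add algebra_simps)
  qed
  then show ?thesis unfolding psi_def by (simp add: algebra_simps sum_distrib_left)
qed

lemma colF_nth:
  "colF \<alpha> \<beta> \<tau> j $ r =
     (binz (lam \<tau> (Suc j)) (int r) + (1/\<beta>) * binz (lam \<tau> (Suc j)) (int r - 1))
     + (\<Sum>p = 1..lam \<tau> j - lam \<tau> (Suc j).
          (1/\<alpha>) ^ p * (binz (lam \<tau> (Suc j) + p - 1) (int r - 1)
                       + (1/\<beta>) * binz (lam \<tau> (Suc j) + p - 1) (int r - 1 - 1)))"
  unfolding colF_def colF_expand fps_add_nth fps_sum_nth fps_mult_left_const_nth coeff1 coeff2 ..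

lemma Amat_hmat: "Amat \<alpha> \<beta> \<tau> = hmat (num_ones \<tau>) (colF \<alpha> \<beta> \<tau>)"
proof (rule eq_matI)
  fix i j assume ij: "i < dim_row (hmat (num_ones \<tau>) (colF \<alpha> \<beta> \<tau>))"
     "j < dim_col (hmat (num_ones \<tau>) (colF \<alpha> \<beta> \<tau>))"
  show "Amat \<alpha> \<beta> \<tau> $$ (i, j) = hmat (num_ones \<tau>) (colF \<alpha> \<beta> \<tau>) $$ (i, j)"
  proof (cases "i \<le> Suc j")
    case True
    then have r: "int (Suc j) - int (Suc i) + 1 = int (Suc j - i)" by auto
    have r2: "int (Suc j) - int (Suc i) = int (Suc j - i) - 1" using True by auto
    show ?thesis using ij True unfolding Amat_def hmat_def Aent_def colF_nth
      by (simp add: r r2 del: of_nat_Suc)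
  next
    case False
    then show ?thesis using ij unfolding Amat_def hmat_def Aent_def
      by (simp add: bz_neg)
  qed
qed (auto simp: Amat_def hmat_def)



lemma num_ones_append[simp]: "num_ones (u @ v) = num_ones u + num_ones v"
  by (simp add: num_ones_def)
lemma num_ones_Nil[simp]: "num_ones [] = 0" by (simp add: num_ones_def)
lemma num_ones_Cons[simp]: "num_ones (x # v) = (if x then Suc (num_ones v) else num_ones v)"
  by (simp add: num_ones_def)
lemma num_ones_replicate_False[simp]: "num_ones (replicate m False) = 0"
  by (induction m) auto
lemma num_ones_le: "num_ones u \<le> length u"
  by (simp add: num_ones_def)

lemma ones_pos_snoc: "ones_pos (u @ [x]) = ones_pos u @ (if x then [length u] else [])"
proof -
  have "filter (\<lambda>j. (u @ [x]) ! j) [0..<length u] = filter (\<lambda>j. u ! j) [0..<length u]"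
    by (rule filter_cong) (auto simp: nth_append)
  then show ?thesis by (simp add: ones_pos_def)
qed

lemma ones_pos_Nil[simp]: "ones_pos [] = []" by (simp add: ones_pos_def)

lemma length_ones_pos: "length (ones_pos u) = num_ones u"
  by (induction u rule: rev_induct) (auto simp: ones_pos_snoc)

lemma ones_pos_less: "p \<in> set (ones_pos u) \<Longrightarrow> p < length u"
  by (simp add: ones_pos_def)

lemma lam_zero_out: "\<not> (1 \<le> i \<and> i \<le> num_ones u) \<Longrightarrow> lam u i = 0"
  by (auto simp: lam_def)

lemma lam_snoc_False: "lam (u @ [False]) i = (if 1 \<le> i \<and> i \<le> num_ones u then lam u i + 1 else 0)"
proof (cases "1 \<le> i \<and> i \<le> num_ones u")
  case True
  let ?p = "ones_pos u ! (i - 1)"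
  have ip: "i - 1 < length (ones_pos u)" using True by (simp add: length_ones_pos, linarith)
  have pe: "ones_pos (u @ [False]) ! (i - 1) = ?p" by (simp add: ones_pos_snoc)
  have "?p < length u" using ones_pos_less[OF nth_mem[OF ip]] .
  then have dr: "drop (?p + 1) (u @ [False]) = drop (?p + 1) u @ [False]" by simp
  have "lam (u @ [False]) i = length (filter Not (drop (?p + 1) u @ [False]))"
    unfolding lam_def pe dr using True by simp
  moreover have "lam u i = length (filter Not (drop (?p + 1) u))"
    unfolding lam_def using True by simp
  ultimately show ?thesis using True by simp
next
  case False
  then show ?thesis by (auto simp: lam_def)
qed

lemma lam_snoc_True: "lam (u @ [True]) i = lam u i"
proof (cases "1 \<le> i \<and> i \<le> num_ones u")
  case True
  let ?p = "ones_pos u ! (i - 1)"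
  have ip: "i - 1 < length (ones_pos u)" using True by (simp add: length_ones_pos, linarith)
  have pe: "ones_pos (u @ [True]) ! (i - 1) = ?p" using ip by (simp add: ones_pos_snoc nth_append)
  have "?p < length u" using ones_pos_less[OF nth_mem[OF ip]] .
  then have dr: "drop (?p + 1) (u @ [True]) = drop (?p + 1) u @ [True]" by simp
  have "lam (u @ [True]) i = length (filter Not (drop (?p + 1) u @ [True]))"
    unfolding lam_def pe dr using True by simp
  moreover have "lam u i = length (filter Not (drop (?p + 1) u))"
    unfolding lam_def using True by simp
  ultimately show ?thesis using True by simp
next
  case False
  show ?thesis
  proof (cases "i = Suc (num_ones u)")
    case True
    have pe: "ones_pos (u @ [True]) ! (i - 1) = length u"
      using True by (simp add: ones_pos_snoc nth_append length_ones_pos)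
    have "lam (u @ [True]) i = length (filter Not (drop (length u + 1) (u @ [True])))"
      unfolding lam_def pe using True by simp
    then show ?thesis using True False by (simp add: lam_zero_out)
  next
    case False2: False
    then show ?thesis using False by (auto simp: lam_def)
  qed
qed


lemma lam_rep_False: "lam (u @ replicate s False) i = (if 1 \<le> i \<and> i \<le> num_ones u then lam u i + s else 0)"
proof (induction s)
  case 0 then show ?case by (auto simp: lam_zero_out)
next
  case (Suc s)
  have e: "u @ replicate (Suc s) False = (u @ replicate s False) @ [False]"
    by (simp add: replicate_append_same)
  show ?case unfolding e lam_snoc_False num_ones_append num_ones_replicate_False Suc by auto
qed

lemma lam_le_length: "lam u i \<le> length u"
  unfolding lam_def by (auto intro: order_trans[OF length_filter_le])

lemma decomp_word: "1 \<le> num_ones \<tau> \<Longrightarrow> \<exists>u m. \<tau> = u @ True # replicate m False"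
proof (induction \<tau> rule: rev_induct)
  case Nil then show ?case by simp
next
  case (snoc x xs)
  show ?case
  proof (cases x)
    case True then show ?thesis by (intro exI[of _ xs] exI[of _ 0]) simp
  next
    case False
    then have "1 \<le> num_ones xs" using snoc.prems by simp
    then obtain u m where "xs = u @ True # replicate m False" using snoc.IH by blast
    then show ?thesis using False
      by (intro exI[of _ u] exI[of _ "Suc m"]) (simp add: replicate_append_same)
  qed
qed

lemma lam_tau:
  "lam (u @ True # replicate m False) i =
     (if 1 \<le> i \<and> i \<le> num_ones u then lam u i + m else if i = Suc (num_ones u) then m else 0)"
proof -
  have e: "u @ True # replicate m False = (u @ [True]) @ replicate m False" by simp
  show ?thesis unfolding e lam_rep_False lam_snoc_True
    by (auto simp: lam_zero_out)
qed



definition Kp :: "'a::field \<Rightarrow> 'a \<Rightarrow> nat \<Rightarrow> 'a fps" where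
  "Kp a b n = (1 + fps_const b * fps_X) * psi a n"

lemma psi_Suc: "psi a (Suc n) = psi a n + fps_X * fps_const (a ^ Suc n) * (1 + fps_X) ^ n"
  unfolding psi_def by (simp add: algebra_simps)

lemma psi_add: "psi a (N + M) = psi a N + fps_const (a ^ N) * (1 + fps_X) ^ N * (psi a M - 1)"
proof (induction M)
  case 0 then show ?case by (simp add: psi_def)
next
  case (Suc M)
  have "psi a (N + Suc M) = psi a (N + M) + fps_X * fps_const (a ^ Suc (N + M)) * (1 + fps_X) ^ (N + M)"
    using psi_Suc[of a "N + M"] by simp
  also have "\<dots> = psi a N + fps_const (a ^ N) * (1 + fps_X) ^ N * (psi a (Suc M) - 1)"
    unfolding Suc psi_Suc[of a M] by (simp add: algebra_simps power_add fps_const_mult[symmetric]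
        del: fps_const_mult)
  finally show ?case .
qed

lemma Kp_add: "Kp a b (N + M) = Kp a b N + fps_const (a ^ N) * (1 + fps_X) ^ N * (Kp a b M - (1 + fps_const b * fps_X))"
  unfolding Kp_def psi_add by (simp add: algebra_simps)

lemma Kp_Suc: "Kp a b (Suc n) = Kp a b n + fps_const (a ^ Suc n) * (1 + fps_const b * fps_X) * fps_X * (1 + fps_X) ^ n"
  unfolding Kp_def psi_Suc by (simp add: algebra_simps)

lemma Kp0: "Kp a b n $ 0 = 1"
  unfolding Kp_def psi_def by simp

lemma Kp1_Suc: "Kp a b (Suc n) $ 1 = Kp a b n $ 1 + a ^ Suc n"
proof -
  have "(fps_const (a ^ Suc n) * (1 + fps_const b * fps_X) * fps_X * (1 + fps_X) ^ n) $ 1 = a ^ Suc n"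
  proof -
    have "fps_const (a ^ Suc n) * (1 + fps_const b * fps_X) * fps_X * (1 + fps_X) ^ n
        = fps_const (a ^ Suc n) * (fps_X * ((1 + fps_const b * fps_X) * (1 + fps_X) ^ n))"
      by (simp add: algebra_simps)
    then show ?thesis by (simp only: fps_mult_left_const_nth coeff2) (simp add: binz_def)
  qed
  then show ?thesis unfolding Kp_Suc by simp
qed

lemma poly_ident:
  fixes a b :: "'a::field"
  defines "Y \<equiv> (1 + fps_X :: 'a fps)"
  shows "fps_X * (fps_const b * Y ^ m * (Kp a b m' - 1) + (\<Sum>s=1..m. Y ^ (m - s) * (Kp a b (m' + s) - 1)))
       = fps_const (Kp a b m $ 1) * fps_X * Y ^ m * Kp a b m' - (Kp a b m - 1)"
proof (induction m)
  case 0
  then show ?case by (simp add: Kp_def psi_def algebra_simps)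
next
  case (Suc m)
  have sum: "(\<Sum>s=1..Suc m. Y ^ (Suc m - s) * (Kp a b (m' + s) - 1))
      = Y * (\<Sum>s=1..m. Y ^ (m - s) * (Kp a b (m' + s) - 1)) + (Kp a b (m' + Suc m) - 1)"
  proof -
    have "(\<Sum>s=1..Suc m. Y ^ (Suc m - s) * (Kp a b (m' + s) - 1))
        = (\<Sum>s=1..m. Y ^ (Suc m - s) * (Kp a b (m' + s) - 1)) + (Kp a b (m' + Suc m) - 1)"
      by simp
    moreover have "(\<Sum>s=1..m. Y ^ (Suc m - s) * (Kp a b (m' + s) - 1))
        = Y * (\<Sum>s=1..m. Y ^ (m - s) * (Kp a b (m' + s) - 1))"
      unfolding sum_distrib_left
      by (rule sum.cong) (auto simp: Suc_diff_le algebra_simps)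
    ultimately show ?thesis by simp
  qed
  have KK: "Kp a b (m' + Suc m) = Kp a b (Suc m) + fps_const (a ^ Suc m) * Y ^ Suc m * (Kp a b m' - (1 + fps_const b * fps_X))"
    using Kp_add[of a b "Suc m" m'] unfolding Y_def by (simp add: add.commute)
  have LHS: "fps_X * (fps_const b * Y ^ Suc m * (Kp a b m' - 1) + (\<Sum>s=1..Suc m. Y ^ (Suc m - s) * (Kp a b (m' + s) - 1)))
     = Y * (fps_X * (fps_const b * Y ^ m * (Kp a b m' - 1) + (\<Sum>s=1..m. Y ^ (m - s) * (Kp a b (m' + s) - 1))))
       + fps_X * (Kp a b (m' + Suc m) - 1)"
    unfolding sum by (simp add: algebra_simps)
  show ?case unfolding LHS Suc KK Kp1_Suc unfolding Kp_Suc[of a b m]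
    by (simp add: Y_def algebra_simps fps_const_add[symmetric] del: fps_const_add)
qed

lemma Ypow0: "((1 + fps_X :: 'a::field fps) ^ n) $ 0 = 1"
  by (simp add: binom_fps_nth)

lemma Yinv: "((1 + fps_X :: 'a::field fps) ^ n) * inverse ((1 + fps_X) ^ n) = 1"
  by (rule inverse_mult_eq_1') (simp add: Ypow0)

lemma Yinv_split: "p + q = n \<Longrightarrow> inverse ((1 + fps_X :: 'a::field fps) ^ n) * (1 + fps_X) ^ p = inverse ((1 + fps_X) ^ q)"
proof -
  assume "p + q = n"
  then have e: "(1 + fps_X :: 'a fps) ^ n = (1 + fps_X) ^ p * (1 + fps_X) ^ q"
    by (metis power_add)
  have "inverse ((1 + fps_X :: 'a fps) ^ n) = inverse ((1 + fps_X) ^ p) * inverse ((1 + fps_X) ^ q)"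
    unfolding e fps_inverse_mult ..
  then show ?thesis using Yinv[of p] by (simp add: algebra_simps)
qed

lemma det_rec:
  fixes a b :: "'a::field" and B :: "nat \<Rightarrow> 'a fps" and m m' k0 :: nat
  assumes B0: "\<And>j. 1 \<le> j \<Longrightarrow> j \<le> k0 \<Longrightarrow> B j $ 0 = 1"
  defines "Y \<equiv> (1 + fps_X :: 'a fps)"
  defines "cu \<equiv> (\<lambda>s j. if j \<le> k0 then Y ^ (m' + s) * B j else Kp a b (m' + s))"
  defines "ct \<equiv> (\<lambda>j. if j \<le> k0 then Y ^ (m + m') * B j else if j = Suc k0 then Y ^ m * Kp a b m' else Kp a b m)"
  shows "det (hmat (Suc (Suc k0)) ct) = (\<Sum>s=1..m. det (hmat (Suc k0) (cu s))) + b * det (hmat (Suc k0) (cu 0))"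
proof -
  define T where "T = Tser B k0"
  define H where "H = (\<lambda>n. inverse (Y ^ n) * (Kp a b n - 1))"
  have du: "det (hmat (Suc k0) (cu s)) = (-1)^k0 * (H (m' + s) * T) $ Suc k0" for s
  proof -
    have "det (hmat (Suc k0) (cu s)) = (-1)^k0 *
       ((inverse (Y ^ (m' + s)) * (cu s (Suc k0) - fps_const (cu s (Suc k0) $ 0))) * Tser B k0) $ Suc k0"
      by (rule detR) (auto simp: Y_def Ypow0 B0 cu_def)
    then show ?thesis by (simp add: cu_def H_def T_def Kp0)
  qed
  define K' where "K' = inverse (Y ^ m') * Kp a b m'"
  define c where "c = (\<lambda>j. if j \<le> k0 then B j else K')"
  have K'0: "K' $ 0 = 1" by (simp add: K'_def Y_def Ypow0 Kp0)
  define H' where "H' = inverse (Y ^ (m + m')) * (Kp a b m - 1)"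
  have dt0: "det (hmat (Suc (Suc k0)) ct) = (-1)^(Suc k0) *
       ((inverse (Y ^ (m + m')) * (ct (Suc (Suc k0)) - fps_const (ct (Suc (Suc k0)) $ 0))) * Tser c (Suc k0)) $ Suc (Suc k0)"
  proof (rule detR)
    show "(Y ^ (m + m')) $ 0 = 1" by (simp add: Y_def Ypow0)
    show "\<And>j. 1 \<le> j \<Longrightarrow> j \<le> Suc k0 \<Longrightarrow> c j $ 0 = 1" using B0 K'0 by (auto simp: c_def)
    show "ct j = Y ^ (m + m') * c j" if "1 \<le> j" "j \<le> Suc k0" for j
    proof (cases "j \<le> k0")
      case True then show ?thesis by (simp add: ct_def c_def)
    next
      case False
      then have j: "j = Suc k0" using that by simp
      have "Y ^ (m + m') * K' = Y ^ m * (Y ^ m' * inverse (Y ^ m')) * Kp a b m'"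
        by (simp add: K'_def power_add algebra_simps)
      also have "\<dots> = Y ^ m * Kp a b m'" unfolding Y_def Yinv by simp
      finally show ?thesis using j by (simp add: ct_def c_def)
    qed
  qed
  have ctk: "ct (Suc (Suc k0)) = Kp a b m" by (simp add: ct_def)
  have Tc: "Tser c k0 = T" unfolding T_def by (rule Tser_cong) (simp add: c_def)
  define E where "E = (K' * T) $ Suc k0"
  have TS: "Tser c (Suc k0) = T - fps_const E * fps_X ^ Suc k0"
  proof -
    have "c (Suc k0) = K'" by (simp add: c_def)
    then show ?thesis unfolding Tser.simps Tc E_def by simp
  qed
  have dt: "det (hmat (Suc (Suc k0)) ct) = (-1)^(Suc k0) * (H' * (T - fps_const E * fps_X ^ Suc k0)) $ Suc (Suc k0)"
    using dt0 unfolding ctk TS by (simp add: Kp0 H'_def del: power_Suc)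
  define g where "g = Kp a b m $ 1"
  have H'1: "H' $ Suc 0 = g"
    unfolding H'_def g_def by (simp add: Y_def Ypow0 Kp0)
  have ident: "fps_X * (fps_const b * H m' + (\<Sum>s=1..m. H (m' + s))) = fps_const g * fps_X * K' - H'"
  proof -
    let ?I = "inverse (Y ^ (m + m'))"
    have P: "?I * (fps_X * (fps_const b * Y ^ m * (Kp a b m' - 1) + (\<Sum>s=1..m. Y ^ (m - s) * (Kp a b (m' + s) - 1))))
       = ?I * (fps_const g * fps_X * Y ^ m * Kp a b m' - (Kp a b m - 1))"
      using poly_ident[of b m a m'] unfolding Y_def g_def by simp
    have s1: "?I * Y ^ m = inverse (Y ^ m')" unfolding Y_def by (rule Yinv_split) simp
    have s2: "?I * Y ^ (m - s) = inverse (Y ^ (m' + s))" if "s \<in> {1..m}" for s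
      unfolding Y_def by (rule Yinv_split) (use that in auto)
    have L: "?I * (fps_X * (fps_const b * Y ^ m * (Kp a b m' - 1) + (\<Sum>s=1..m. Y ^ (m - s) * (Kp a b (m' + s) - 1))))
        = fps_X * (fps_const b * H m' + (\<Sum>s=1..m. H (m' + s)))"
    proof -
      have "?I * (\<Sum>s=1..m. Y ^ (m - s) * (Kp a b (m' + s) - 1)) = (\<Sum>s=1..m. H (m' + s))"
        unfolding sum_distrib_left H_def
        by (rule sum.cong) (auto simp: mult.assoc[symmetric] s2)
      moreover have "?I * (fps_const b * Y ^ m * (Kp a b m' - 1)) = fps_const b * H m'"
        unfolding H_def using s1 by (simp add: algebra_simps)
      ultimately show ?thesis by (simp add: algebra_simps)
    qed
    have R: "?I * (fps_const g * fps_X * Y ^ m * Kp a b m' - (Kp a b m - 1)) = fps_const g * fps_X * K' - H'"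
      unfolding K'_def H'_def using s1 by (simp add: algebra_simps)
    show ?thesis using P unfolding L R .
  qed
  have lhs: "(H' * (T - fps_const E * fps_X ^ Suc k0)) $ Suc (Suc k0) = (H' * T) $ Suc (Suc k0) - E * g"
  proof -
    have "H' * (fps_const E * fps_X ^ Suc k0) = fps_const E * (fps_X ^ Suc k0 * H')" by (simp add: algebra_simps)
    then have "(H' * (fps_const E * fps_X ^ Suc k0)) $ Suc (Suc k0) = E * H' $ 1"
      by (simp only: fps_mult_left_const_nth fps_X_power_mult_nth) simp
    then show ?thesis by (simp add: right_diff_distrib H'1 del: power_Suc)
  qed
  have rhs: "((fps_const b * H m' + (\<Sum>s=1..m. H (m' + s))) * T) $ Suc k0 = g * E - (H' * T) $ Suc (Suc k0)"
  proof -
    have "((fps_const b * H m' + (\<Sum>s=1..m. H (m' + s))) * T) $ Suc k0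
        = (fps_X * ((fps_const b * H m' + (\<Sum>s=1..m. H (m' + s))) * T)) $ Suc (Suc k0)" by simp
    also have "\<dots> = ((fps_const g * fps_X * K' - H') * T) $ Suc (Suc k0)"
      unfolding ident[symmetric] by (simp only: mult.assoc)
    also have "\<dots> = g * E - (H' * T) $ Suc (Suc k0)"
    proof -
      have "(fps_const g * fps_X * K' - H') * T = fps_const g * (fps_X * (K' * T)) - H' * T"
        by (simp add: algebra_simps)
      then show ?thesis by (simp add: E_def)
    qed
    finally show ?thesis .
  qed
  have "(\<Sum>s=1..m. det (hmat (Suc k0) (cu s))) + b * det (hmat (Suc k0) (cu 0))
      = (-1)^k0 * ((fps_const b * H m' + (\<Sum>s=1..m. H (m' + s))) * T) $ Suc k0"
  proof -
    have "(fps_const b * H m' + (\<Sum>s=1..m. H (m' + s))) * T = fps_const b * (H m' * T) + (\<Sum>s=1..m. H (m' + s) * T)"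
      by (simp add: algebra_simps sum_distrib_right sum_distrib_left)
    then have "((fps_const b * H m' + (\<Sum>s=1..m. H (m' + s))) * T) $ Suc k0
       = b * (H m' * T) $ Suc k0 + (\<Sum>s=1..m. (H (m' + s) * T) $ Suc k0)"
      by (simp only: fps_add_nth fps_mult_left_const_nth fps_sum_nth)
    then show ?thesis unfolding du by (simp add: algebra_simps sum_distrib_left)
  qed
  also have "\<dots> = det (hmat (Suc (Suc k0)) ct)"
    unfolding rhs dt lhs by (simp add: algebra_simps)
  finally show ?thesis by simp
qed



definition ctab :: "(nat \<Rightarrow> nat \<Rightarrow> bool) \<Rightarrow> (nat \<Rightarrow> nat \<Rightarrow> sym option) \<Rightarrow> bool" where
  "ctab B f \<longleftrightarrow>
     (\<forall>i j. \<not> B i j \<longrightarrow> f i j = None) \<and>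
     (\<forall>i j i'. B i j \<and> f i j = Some SA \<and> i' < i \<and> B i' j \<longrightarrow> f i' j = None) \<and>
     (\<forall>i j j'. B i j \<and> f i j = Some SB \<and> j' < j \<and> B i j' \<longrightarrow> f i j' = None) \<and>
     (\<forall>i j. B i j \<and>
        \<not> (\<exists>i'. i < i' \<and> B i' j \<and> f i' j = Some SA) \<and>
        \<not> (\<exists>j'. j < j' \<and> B i j' \<and> f i j' = Some SB) \<longrightarrow> f i j \<noteq> None)"

lemma cat_ctab: "catalan_tableau \<tau> f = ctab (is_box \<tau>) f"
  by (simp add: catalan_tableau_def ctab_def)

lemma ctab_none: "ctab B f \<Longrightarrow> \<not> B i j \<Longrightarrow> f i j = None"
  unfolding ctab_def by blast
lemma ctab_A: "ctab B f \<Longrightarrow> B i j \<Longrightarrow> f i j = Some SA \<Longrightarrow> i' < i \<Longrightarrow> B i' j \<Longrightarrow> f i' j = None"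
  unfolding ctab_def by blast
lemma ctab_B: "ctab B f \<Longrightarrow> B i j \<Longrightarrow> f i j = Some SB \<Longrightarrow> j' < j \<Longrightarrow> B i j' \<Longrightarrow> f i j' = None"
  unfolding ctab_def by blast
lemma ctab_fill: "ctab B f \<Longrightarrow> B i j \<Longrightarrow> (\<And>i'. i < i' \<Longrightarrow> B i' j \<Longrightarrow> f i' j \<noteq> Some SA)
   \<Longrightarrow> (\<And>j'. j < j' \<Longrightarrow> B i j' \<Longrightarrow> f i j' \<noteq> Some SB) \<Longrightarrow> f i j \<noteq> None"
  unfolding ctab_def by blast
lemma ctabI:
  assumes "\<And>i j. \<not> B i j \<Longrightarrow> f i j = None"
    "\<And>i j i'. B i j \<Longrightarrow> f i j = Some SA \<Longrightarrow> i' < i \<Longrightarrow> B i' j \<Longrightarrow> f i' j = None"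
    "\<And>i j j'. B i j \<Longrightarrow> f i j = Some SB \<Longrightarrow> j' < j \<Longrightarrow> B i j' \<Longrightarrow> f i j' = None"
    "\<And>i j. B i j \<Longrightarrow> (\<forall>i'. i < i' \<longrightarrow> B i' j \<longrightarrow> f i' j \<noteq> Some SA)
       \<Longrightarrow> (\<forall>j'. j < j' \<longrightarrow> B i j' \<longrightarrow> f i j' \<noteq> Some SB) \<Longrightarrow> f i j \<noteq> None"
  shows "ctab B f"
  unfolding ctab_def using assms by blast

lemma UNIV_sym_option: "(UNIV :: sym option set) = {None, Some SA, Some SB}"
proof -
  have "x \<in> {None, Some SA, Some SB}" for x :: "sym option"
    apply (cases x)
     apply simp
    subgoal for a by (cases a) auto
    done
  then show ?thesis by auto
qed

lemma finite_ctab: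
  assumes "finite {(i,j). B i j}"
  shows "finite {f. ctab B f}"
proof -
  let ?A = "{(i,j). B i j}"
  let ?S = "{h :: nat \<times> nat \<Rightarrow> sym option. \<forall>x. (x \<in> ?A \<longrightarrow> h x \<in> UNIV) \<and> (x \<notin> ?A \<longrightarrow> h x = None)}"
  have fS: "finite ?S"
    by (rule finite_set_of_finite_funs) (use assms in \<open>auto simp: UNIV_sym_option\<close>)
  have "{f. ctab B f} \<subseteq> curry ` ?S"
  proof
    fix f assume "f \<in> {f. ctab B f}"
    then have "case_prod f \<in> ?S" using ctab_none[of B f] by auto
    moreover have "f = curry (case_prod f)" by simp
    ultimately show "f \<in> curry ` ?S" by blast
  qed
  then show ?thesis using finite_surj[OF fS] by blast
qed

lemma finite_boxes: "finite {(i,j). is_box \<tau> i j}"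
proof -
  have "{(i,j). is_box \<tau> i j} \<subseteq> {..num_ones \<tau>} \<times> {..length \<tau>}"
    unfolding is_box_def using lam_le_length[of \<tau>] by (auto intro: order_trans)
  then show ?thesis by (rule finite_subset) auto
qed

lemma finite_tab: "finite {f. catalan_tableau \<tau> f}"
  unfolding cat_ctab by (rule finite_ctab[OF finite_boxes])

lemma opt_sym: "x \<noteq> None \<Longrightarrow> x \<noteq> Some SB \<Longrightarrow> x = Some SA"
proof (cases x)
  case (Some a)
  assume "x \<noteq> Some SB"
  then show ?thesis using Some by (cases a) auto
qed auto

definition fcolA :: "nat \<Rightarrow> nat \<Rightarrow> (nat \<Rightarrow> nat \<Rightarrow> sym option) \<Rightarrow> nat" where
  "fcolA C kk f = card {j \<in> {1..C}. \<forall>i \<in> {1..kk}. f i j \<noteq> Some SA}"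
definition frowA :: "nat \<Rightarrow> nat \<Rightarrow> (nat \<Rightarrow> nat \<Rightarrow> sym option) \<Rightarrow> nat" where
  "frowA C kk f = card {i \<in> {1..kk}. \<forall>j \<in> {1..C}. f i j \<noteq> Some SB}"

locale rr =
  fixes k m :: nat and L :: "nat \<Rightarrow> nat"
  assumes k1: "1 \<le> k"
begin

definition Bt :: "nat \<Rightarrow> nat \<Rightarrow> bool" where
  "Bt i j \<longleftrightarrow> (1 \<le> i \<and> i < k \<and> 1 \<le> j \<and> j \<le> L i + m) \<or> (i = k \<and> 1 \<le> j \<and> j \<le> m)"
definition Bs :: "nat \<Rightarrow> nat \<Rightarrow> nat \<Rightarrow> bool" where
  "Bs s i j \<longleftrightarrow> 1 \<le> i \<and> i < k \<and> 1 \<le> j \<and> j \<le> L i + s"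
definition gg :: "nat \<Rightarrow> nat \<Rightarrow> nat" where
  "gg s j = (if j \<le> s then j else j + (m - s))"
definition ginv :: "nat \<Rightarrow> nat \<Rightarrow> nat" where
  "ginv s j = (if j \<le> s then j else j - (m - s))"
definition rowk :: "nat \<Rightarrow> nat \<Rightarrow> sym option" where
  "rowk s j = (if j = s \<and> 1 \<le> s then Some SB else if s < j \<and> j \<le> m then Some SA else None)"
definition build :: "nat \<Rightarrow> (nat \<Rightarrow> nat \<Rightarrow> sym option) \<Rightarrow> nat \<Rightarrow> nat \<Rightarrow> sym option" where
  "build s f i j = (if i = k then rowk s j else if j \<le> s then f i j else if j \<le> m then None else f i (j - (m - s)))"
definition del :: "nat \<Rightarrow> (nat \<Rightarrow> nat \<Rightarrow> sym option) \<Rightarrow> nat \<Rightarrow> nat \<Rightarrow> sym option" where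
  "del s f i j = (if i < k then f i (gg s j) else None)"

context
  fixes s :: nat
  assumes sm: "s \<le> m"
begin

lemma gg_mono: "j < j' \<Longrightarrow> gg s j < gg s j'"
  unfolding gg_def using sm by auto
lemma gg_less_iff: "gg s j < gg s j' \<longleftrightarrow> j < j'"
  using gg_mono by (metis not_less_iff_gr_or_eq)
lemma gg_ginv: "\<not> (s < j \<and> j \<le> m) \<Longrightarrow> gg s (ginv s j) = j"
  unfolding gg_def ginv_def using sm by auto
lemma ginv_gg: "ginv s (gg s j) = j"
  unfolding gg_def ginv_def using sm by auto
lemma gg_not_mid: "\<not> (s < gg s j \<and> gg s j \<le> m)"
  unfolding gg_def using sm by auto
lemma build_gg: "i \<noteq> k \<Longrightarrow> build s f i (gg s j) = f i j"
  unfolding build_def gg_def using sm by auto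
lemma Bt_gg: "i < k \<Longrightarrow> Bt i (gg s j) \<longleftrightarrow> Bs s i j"
  unfolding Bt_def Bs_def gg_def using sm by auto
lemma rowk_not_SA: "rowk s (gg s j) \<noteq> Some SA"
  unfolding rowk_def gg_def using sm by auto
lemma inj_gg: "inj_on (gg s) A"
  by (rule inj_onI) (metis ginv_gg)

end

lemma build_mid: "i \<noteq> k \<Longrightarrow> s < j \<Longrightarrow> j \<le> m \<Longrightarrow> build s f i j = None"
  unfolding build_def by auto
lemma build_k: "build s f k j = rowk s j"
  unfolding build_def by auto

lemma Bt_k: "Bt k j \<longleftrightarrow> 1 \<le> j \<and> j \<le> m"
  unfolding Bt_def by auto
lemma Bt_le: "Bt i j \<Longrightarrow> i \<le> k \<and> 1 \<le> i"
  unfolding Bt_def using k1 by auto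
lemma Bs_less: "Bs s i j \<Longrightarrow> i < k"
  unfolding Bs_def by auto
lemma Bt_mid: "1 \<le> i \<Longrightarrow> i < k \<Longrightarrow> 1 \<le> j \<Longrightarrow> j \<le> m \<Longrightarrow> Bt i j"
  unfolding Bt_def by auto

lemma build_tab:
  assumes sm: "s \<le> m" and f: "ctab (Bs s) f"
  shows "ctab Bt (build s f)"
proof (rule ctabI)
  fix i j assume nb: "\<not> Bt i j"
  show "build s f i j = None"
  proof (cases "i = k")
    case True then show ?thesis using nb sm by (auto simp: build_k rowk_def Bt_k)
  next
    case False
    show ?thesis
    proof (cases "s < j \<and> j \<le> m")
      case True then show ?thesis using False build_mid by blast
    next
      case mid: False
      define j0 where "j0 = ginv s j"
      have j: "j = gg s j0" unfolding j0_def using gg_ginv[OF sm mid] by simp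
      have "\<not> Bs s i j0"
      proof (cases "i < k")
        case True then show ?thesis using Bt_gg[OF sm True] nb j by simp
      next
        case False then show ?thesis using Bs_less by blast
      qed
      then show ?thesis using j build_gg[OF sm \<open>i \<noteq> k\<close>] ctab_none[OF f] by simp
    qed
  qed
next
  fix i j i' assume b: "Bt i j" and a: "build s f i j = Some SA" and ii: "i' < i" and b': "Bt i' j"
  have i'k: "i' < k" using Bt_le[OF b] ii by simp
  show "build s f i' j = None"
  proof (cases "s < j \<and> j \<le> m")
    case True then show ?thesis using build_mid i'k by simp
  next
    case mid: False
    define j0 where "j0 = ginv s j"
    have j: "j = gg s j0" unfolding j0_def using gg_ginv[OF sm mid] by simp
    have ik: "i \<noteq> k" using a mid by (auto simp: build_k rowk_def split: if_splits)
    then have ik': "i < k" using Bt_le[OF b] by simp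
    have "f i j0 = Some SA" using a j build_gg[OF sm ik] by simp
    moreover have "Bs s i j0" using Bt_gg[OF sm ik'] b j by simp
    moreover have "Bs s i' j0" using Bt_gg[OF sm i'k] b' j by simp
    ultimately have "f i' j0 = None" using ctab_A[OF f] ii by blast
    then show ?thesis using j build_gg[OF sm] i'k by simp
  qed
next
  fix i j j' assume b: "Bt i j" and bb: "build s f i j = Some SB" and jj: "j' < j" and b': "Bt i j'"
  show "build s f i j' = None"
  proof (cases "i = k")
    case True then show ?thesis using bb jj by (auto simp: build_k rowk_def split: if_splits)
  next
    case False
    then have ik': "i < k" using Bt_le[OF b] by simp
    have mid: "\<not> (s < j \<and> j \<le> m)" using bb build_mid[OF False] by auto
    define j0 where "j0 = ginv s j"
    have j: "j = gg s j0" unfolding j0_def using gg_ginv[OF sm mid] by simp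
    have fj0: "f i j0 = Some SB" using bb j build_gg[OF sm False] by simp
    have bj0: "Bs s i j0" using Bt_gg[OF sm ik'] b j by simp
    show ?thesis
    proof (cases "s < j' \<and> j' \<le> m")
      case True then show ?thesis using build_mid[OF False] by simp
    next
      case mid': False
      define j1 where "j1 = ginv s j'"
      have j': "j' = gg s j1" unfolding j1_def using gg_ginv[OF sm mid'] by simp
      have "j1 < j0" using jj j j' gg_less_iff[OF sm] by simp
      moreover have "Bs s i j1" using Bt_gg[OF sm ik'] b' j' by simp
      ultimately have "f i j1 = None" using ctab_B[OF f bj0 fj0] by blast
      then show ?thesis using j' build_gg[OF sm False] by simp
    qed
  qed
next
  fix i j assume b: "Bt i j"
    and H1: "\<forall>i'. i < i' \<longrightarrow> Bt i' j \<longrightarrow> build s f i' j \<noteq> Some SA"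
    and H2: "\<forall>j'. j < j' \<longrightarrow> Bt i j' \<longrightarrow> build s f i j' \<noteq> Some SB"
  show "build s f i j \<noteq> None"
  proof (cases "i = k")
    case True
    then have j: "1 \<le> j" "j \<le> m" using b Bt_k by auto
    show ?thesis
    proof (cases "j < s")
      case True
      then have "Bt k s" using j sm Bt_k by auto
      moreover have "build s f k s = Some SB" using True j by (simp add: build_k rowk_def)
      ultimately show ?thesis using H2 True \<open>i = k\<close> by blast
    next
      case False
      then show ?thesis using j \<open>i = k\<close> by (auto simp: build_k rowk_def)
    qed
  next
    case False
    then have ik': "i < k" and i1: "1 \<le> i" using Bt_le[OF b] by auto
    show ?thesis
    proof (cases "s < j \<and> j \<le> m")
      case True
      then have "Bt k j" using Bt_k by auto
      moreover have "build s f k j = Some SA" using True by (auto simp: build_k rowk_def)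
      ultimately show ?thesis using H1 ik' by blast
    next
      case mid: False
      define j0 where "j0 = ginv s j"
      have j: "j = gg s j0" unfolding j0_def using gg_ginv[OF sm mid] by simp
      have bj0: "Bs s i j0" using Bt_gg[OF sm ik'] b j by simp
      have "f i j0 \<noteq> None"
      proof (rule ctab_fill[OF f bj0])
        fix i' assume "i < i'" "Bs s i' j0"
        then have "i' < k" "Bt i' j" using Bs_less Bt_gg[OF sm] j by auto
        then show "f i' j0 \<noteq> Some SA" using H1 \<open>i < i'\<close> build_gg[OF sm, of i'] j by auto
      next
        fix j' assume "j0 < j'" "Bs s i j'"
        then have "Bt i (gg s j')" "j < gg s j'" using Bt_gg[OF sm ik'] gg_mono[OF sm] j by auto
        then show "f i j' \<noteq> Some SB" using H2 build_gg[OF sm False] by auto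
      qed
      then show ?thesis using j build_gg[OF sm False] by simp
    qed
  qed
qed


lemma rowk_shape:
  assumes f: "ctab Bt f"
  shows "\<exists>s\<le>m. \<forall>j. f k j = rowk s j"
proof (cases "\<exists>b. f k b = Some SB")
  case True
  then obtain b where fb: "f k b = Some SB" by blast
  have bb: "Bt k b" using fb ctab_none[OF f, of k b] by auto
  then have b1: "1 \<le> b" "b \<le> m" using Bt_k by auto
  have noSB: "f k j \<noteq> Some SB" if "b < j" for j
  proof
    assume fj: "f k j = Some SB"
    then have "Bt k j" using ctab_none[OF f, of k j] by auto
    then have "f k b = None" using ctab_B[OF f _ fj that bb] by blast
    then show False using fb by simp
  qed
  have "f k j = rowk b j" for j
  proof -
    consider "j < b" | "j = b" | "b < j \<and> j \<le> m" | "m < j" by linarith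
    then show ?thesis
    proof cases
      case 1
      show ?thesis
      proof (cases "Bt k j")
        case True then show ?thesis using ctab_B[OF f bb fb 1] 1 by (simp add: rowk_def)
      next
        case False then show ?thesis using ctab_none[OF f False] 1 by (simp add: rowk_def)
      qed
    next
      case 2 then show ?thesis using fb b1 by (simp add: rowk_def)
    next
      case 3
      then have bj: "Bt k j" using b1 Bt_k by auto
      have "f k j \<noteq> None"
      proof (rule ctab_fill[OF f bj])
        fix i' assume "k < i'" "Bt i' j" then show "f i' j \<noteq> Some SA" using Bt_le by fastforce
      next
        fix j' assume "j < j'" "Bt k j'" then show "f k j' \<noteq> Some SB" using noSB 3 by auto
      qed
      moreover have "f k j \<noteq> Some SB" using noSB 3 by auto
      ultimately have "f k j = Some SA" by (rule opt_sym)
      then show ?thesis using 3 by (simp add: rowk_def)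
    next
      case 4
      then have "\<not> Bt k j" using Bt_k by auto
      then show ?thesis using ctab_none[OF f] 4 b1 by (simp add: rowk_def)
    qed
  qed
  then show ?thesis using b1 by blast
next
  case False
  have "f k j = rowk 0 j" for j
  proof (cases "Bt k j")
    case True
    have "f k j \<noteq> None"
    proof (rule ctab_fill[OF f True])
      fix i' assume "k < i'" "Bt i' j" then show "f i' j \<noteq> Some SA" using Bt_le by fastforce
    next
      fix j' assume "j < j'" "Bt k j'" then show "f k j' \<noteq> Some SB" using False by auto
    qed
    then have "f k j = Some SA" using False by (intro opt_sym) auto
    then show ?thesis using True Bt_k by (simp add: rowk_def)
  next
    case False
    then show ?thesis using ctab_none[OF f False] Bt_k by (auto simp: rowk_def)
  qed
  then show ?thesis by (intro exI[of _ 0]) auto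
qed

lemma rowk_inj: "s \<le> m \<Longrightarrow> s' \<le> m \<Longrightarrow> (\<forall>j. rowk s j = rowk s' j) \<Longrightarrow> s = s'"
proof (rule ccontr)
  assume a: "s \<le> m" "s' \<le> m" "\<forall>j. rowk s j = rowk s' j" "s \<noteq> s'"
  show False
  proof (cases "1 \<le> s")
    case True
    have "rowk s s = Some SB" using True by (simp add: rowk_def)
    moreover have "rowk s' s \<noteq> Some SB" using a(4) by (simp add: rowk_def)
    ultimately show False using a(3) by simp
  next
    case False
    then have "1 \<le> s'" using a(4) by simp
    have "rowk s' s' = Some SB" using \<open>1 \<le> s'\<close> by (simp add: rowk_def)
    moreover have "rowk s s' \<noteq> Some SB" using a(4) by (simp add: rowk_def)
    ultimately show False using a(3) by simp
  qed
qed

lemma del_build: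
  assumes sm: "s \<le> m" and f: "ctab (Bs s) f"
  shows "del s (build s f) = f"
proof (intro ext)
  fix i j show "del s (build s f) i j = f i j"
  proof (cases "i < k")
    case True then show ?thesis using build_gg[OF sm] by (simp add: del_def)
  next
    case False
    then have "\<not> Bs s i j" using Bs_less by blast
    then show ?thesis using ctab_none[OF f] False by (simp add: del_def)
  qed
qed

lemma build_del:
  assumes sm: "s \<le> m" and f: "ctab Bt f" and row: "\<forall>j. f k j = rowk s j"
  shows "build s (del s f) = f"
proof (intro ext)
  fix i j show "build s (del s f) i j = f i j"
  proof (cases "i = k")
    case True then show ?thesis using row by (simp add: build_k)
  next
    case False
    show ?thesis
    proof (cases "s < j \<and> j \<le> m")
      case True
      have "f i j = None"
      proof (cases "1 \<le> i \<and> i < k")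
        case True2: True
        have "Bt k j" using True Bt_k by auto
        moreover have "f k j = Some SA" using row True by (simp add: rowk_def)
        moreover have "Bt i j" using True2 True by (intro Bt_mid) auto
        ultimately show ?thesis using ctab_A[OF f] True2 by blast
      next
        case False2: False
        then have "\<not> Bt i j" using Bt_le False by fastforce
        then show ?thesis using ctab_none[OF f] by blast
      qed
      then show ?thesis using build_mid[OF False] True by simp
    next
      case mid: False
      define j0 where "j0 = ginv s j"
      have j: "j = gg s j0" unfolding j0_def using gg_ginv[OF sm mid] by simp
      have "build s (del s f) i j = del s f i j0" using j build_gg[OF sm False] by simp
      also have "\<dots> = f i j"
      proof (cases "i < k")
        case True then show ?thesis using j by (simp add: del_def)
      next
        case False2: False
        then have "\<not> Bt i j" using Bt_le False by fastforce
        then show ?thesis using ctab_none[OF f] False2 by (simp add: del_def)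
      qed
      finally show ?thesis .
    qed
  qed
qed

lemma del_tab:
  assumes sm: "s \<le> m" and f: "ctab Bt f" and row: "\<forall>j. f k j = rowk s j"
  shows "ctab (Bs s) (del s f)"
proof (rule ctabI)
  fix i j assume nb: "\<not> Bs s i j"
  show "del s f i j = None"
  proof (cases "i < k")
    case True
    then have "\<not> Bt i (gg s j)" using Bt_gg[OF sm True] nb by simp
    then show ?thesis using ctab_none[OF f] True by (simp add: del_def)
  next
    case False then show ?thesis by (simp add: del_def)
  qed
next
  fix i j i' assume b: "Bs s i j" and a: "del s f i j = Some SA" and ii: "i' < i" and b': "Bs s i' j"
  have ik: "i < k" "i' < k" using Bs_less b b' by auto
  have "f i (gg s j) = Some SA" using a ik by (simp add: del_def)
  moreover have "Bt i (gg s j)" "Bt i' (gg s j)" using Bt_gg[OF sm] ik b b' by auto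
  ultimately have "f i' (gg s j) = None" using ctab_A[OF f] ii by blast
  then show "del s f i' j = None" using ik by (simp add: del_def)
next
  fix i j j' assume b: "Bs s i j" and a: "del s f i j = Some SB" and jj: "j' < j" and b': "Bs s i j'"
  have ik: "i < k" using Bs_less b by auto
  have "f i (gg s j) = Some SB" using a ik by (simp add: del_def)
  moreover have "Bt i (gg s j)" "Bt i (gg s j')" using Bt_gg[OF sm] ik b b' by auto
  moreover have "gg s j' < gg s j" using gg_mono[OF sm jj] .
  ultimately have "f i (gg s j') = None" using ctab_B[OF f] by blast
  then show "del s f i j' = None" using ik by (simp add: del_def)
next
  fix i j assume b: "Bs s i j"
    and H1: "\<forall>i'. i < i' \<longrightarrow> Bs s i' j \<longrightarrow> del s f i' j \<noteq> Some SA"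
    and H2: "\<forall>j'. j < j' \<longrightarrow> Bs s i j' \<longrightarrow> del s f i j' \<noteq> Some SB"
  have ik: "i < k" and i1: "1 \<le> i" using b by (auto simp: Bs_def)
  have bt: "Bt i (gg s j)" using Bt_gg[OF sm ik] b by simp
  have "f i (gg s j) \<noteq> None"
  proof (rule ctab_fill[OF f bt])
    fix i' assume ii: "i < i'" and b': "Bt i' (gg s j)"
    show "f i' (gg s j) \<noteq> Some SA"
    proof (cases "i' < k")
      case True
      then have "Bs s i' j" using Bt_gg[OF sm True] b' by simp
      then show ?thesis using H1[rule_format, OF ii] True by (simp add: del_def)
    next
      case False
      then have "i' = k" using Bt_le[OF b'] by simp
      then show ?thesis using row rowk_not_SA[OF sm] by simp
    qed
  next
    fix j' assume jj: "gg s j < j'" and b': "Bt i j'"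
    show "f i j' \<noteq> Some SB"
    proof (cases "s < j' \<and> j' \<le> m")
      case True
      have "Bt k j'" using True Bt_k by auto
      moreover have "f k j' = Some SA" using row True by (simp add: rowk_def)
      ultimately have "f i j' = None" using ctab_A[OF f _ _ ik b'] by blast
      then show ?thesis by simp
    next
      case mid: False
      define j1 where "j1 = ginv s j'"
      have j': "j' = gg s j1" unfolding j1_def using gg_ginv[OF sm mid] by simp
      have "j < j1" using jj j' gg_less_iff[OF sm] by simp
      moreover have "Bs s i j1" using Bt_gg[OF sm ik] b' j' by simp
      ultimately show ?thesis using H2 ik j' by (simp add: del_def)
    qed
  qed
  then show "del s f i j \<noteq> None" using ik by (simp add: del_def)
qed

lemma tab_decomp:
  "{f. ctab Bt f} = (\<Union>s\<in>{0..m}. build s ` {f. ctab (Bs s) f})"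
proof
  show "{f. ctab Bt f} \<subseteq> (\<Union>s\<in>{0..m}. build s ` {f. ctab (Bs s) f})"
  proof
    fix f assume "f \<in> {f. ctab Bt f}"
    then have f: "ctab Bt f" by simp
    obtain s where s: "s \<le> m" "\<forall>j. f k j = rowk s j" using rowk_shape[OF f] by blast
    have "f = build s (del s f)" using build_del[OF s(1) f s(2)] by simp
    moreover have "del s f \<in> {f. ctab (Bs s) f}" using del_tab[OF s(1) f s(2)] by simp
    ultimately show "f \<in> (\<Union>s\<in>{0..m}. build s ` {f. ctab (Bs s) f})" using s(1) by auto
  qed
next
  show "(\<Union>s\<in>{0..m}. build s ` {f. ctab (Bs s) f}) \<subseteq> {f. ctab Bt f}"
    using build_tab by auto
qed

lemma sum_decomp:
  assumes fin: "\<And>s. finite {f. ctab (Bs s) f}"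
  shows "sum W {f. ctab Bt f} = (\<Sum>s=0..m. \<Sum>f\<in>{f. ctab (Bs s) f}. W (build s f))"
proof -
  have "sum W {f. ctab Bt f} = sum W (\<Union>s\<in>{0..m}. build s ` {f. ctab (Bs s) f})"
    unfolding tab_decomp ..
  also have "\<dots> = (\<Sum>s=0..m. sum W (build s ` {f. ctab (Bs s) f}))"
  proof (rule sum.UNION_disjoint)
    show "finite {0..m}" by simp
    show "\<forall>s\<in>{0..m}. finite (build s ` {f. ctab (Bs s) f})" using fin by auto
    show "\<forall>s\<in>{0..m}. \<forall>s'\<in>{0..m}. s \<noteq> s' \<longrightarrow>
        build s ` {f. ctab (Bs s) f} \<inter> build s' ` {f. ctab (Bs s') f} = {}"
    proof (intro ballI impI)
      fix s s' assume "s \<in> {0..m}" "s' \<in> {0..m}" "s \<noteq> s'"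
      then have ne: "\<not> (\<forall>j. rowk s j = rowk s' j)" using rowk_inj[of s s'] by auto
      show "build s ` {f. ctab (Bs s) f} \<inter> build s' ` {f. ctab (Bs s') f} = {}"
      proof (rule ccontr)
        assume "build s ` {f. ctab (Bs s) f} \<inter> build s' ` {f. ctab (Bs s') f} \<noteq> {}"
        then obtain f1 f2 where "build s f1 = build s' f2" by blast
        then have "\<forall>j. rowk s j = rowk s' j" by (metis build_k)
        then show False using ne by simp
      qed
    qed
  qed
  also have "\<dots> = (\<Sum>s=0..m. \<Sum>f\<in>{f. ctab (Bs s) f}. W (build s f))"
  proof (rule sum.cong[OF refl])
    fix s assume "s \<in> {0..m}"
    then have sm: "s \<le> m" by simp
    have "inj_on (build s) {f. ctab (Bs s) f}"
      by (rule inj_onI) (metis del_build[OF sm] mem_Collect_eq)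
    then show "sum W (build s ` {f. ctab (Bs s) f}) = (\<Sum>f\<in>{f. ctab (Bs s) f}. W (build s f))"
      by (simp add: sum.reindex)
  qed
  finally show ?thesis .
qed


lemma fcol_build:
  assumes sm: "s \<le> m" and mC: "m \<le> C"
  shows "fcolA C k (build s f) = fcolA (C - (m - s)) (k - 1) f"
proof -
  let ?A = "{j \<in> {1..C}. \<forall>i \<in> {1..k}. build s f i j \<noteq> Some SA}"
  let ?B = "{j \<in> {1..C - (m - s)}. \<forall>i \<in> {1..k - 1}. f i j \<noteq> Some SA}"
  have "?A = gg s ` ?B"
  proof
    show "?A \<subseteq> gg s ` ?B"
    proof
      fix j assume jA: "j \<in> ?A"
      have mid: "\<not> (s < j \<and> j \<le> m)"
      proof
        assume "s < j \<and> j \<le> m"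
        then have "build s f k j = Some SA" by (simp add: build_k rowk_def)
        then show False using jA k1 by auto
      qed
      define j0 where "j0 = ginv s j"
      have j: "j = gg s j0" unfolding j0_def using gg_ginv[OF sm mid] by simp
      have "j0 \<in> ?B"
      proof -
        have "1 \<le> j0 \<and> j0 \<le> C - (m - s)" using jA mid sm mC unfolding j0_def ginv_def by auto
        moreover have "\<forall>i \<in> {1..k - 1}. f i j0 \<noteq> Some SA"
        proof
          fix i assume "i \<in> {1..k - 1}"
          then have "i \<noteq> k" "i \<in> {1..k}" by auto
          have "build s f i j \<noteq> Some SA" using jA \<open>i \<in> {1..k}\<close> by blast
          then show "f i j0 \<noteq> Some SA" using j build_gg[OF sm \<open>i \<noteq> k\<close>] by simp
        qed
        ultimately show ?thesis by simp
      qed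
      then show "j \<in> gg s ` ?B" using j by blast
    qed
  next
    show "gg s ` ?B \<subseteq> ?A"
    proof
      fix j assume "j \<in> gg s ` ?B"
      then obtain j0 where j0: "j0 \<in> ?B" and j: "j = gg s j0" by blast
      have "1 \<le> j \<and> j \<le> C" using j0 sm mC unfolding j gg_def by auto
      moreover have "\<forall>i \<in> {1..k}. build s f i j \<noteq> Some SA"
      proof
        fix i assume i: "i \<in> {1..k}"
        show "build s f i j \<noteq> Some SA"
        proof (cases "i = k")
          case True then show ?thesis using rowk_not_SA[OF sm] j by (simp add: build_k)
        next
          case False then show ?thesis using i j0 j build_gg[OF sm False] by auto
        qed
      qed
      ultimately show "j \<in> ?A" by simp
    qed
  qed
  then show ?thesis unfolding fcolA_def using card_image[OF inj_gg[OF sm]] by simp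
qed

lemma frow_build:
  assumes sm: "s \<le> m" and mC: "m \<le> C"
  shows "frowA C k (build s f) = frowA (C - (m - s)) (k - 1) f + (if s = 0 then 1 else 0)"
proof -
  let ?A = "{i \<in> {1..k}. \<forall>j \<in> {1..C}. build s f i j \<noteq> Some SB}"
  let ?B = "{i \<in> {1..k - 1}. \<forall>j \<in> {1..C - (m - s)}. f i j \<noteq> Some SB}"
  have rowi: "(\<forall>j \<in> {1..C}. build s f i j \<noteq> Some SB) \<longleftrightarrow> (\<forall>j \<in> {1..C - (m - s)}. f i j \<noteq> Some SB)"
    if ik: "i \<noteq> k" for i
  proof
    assume H: "\<forall>j \<in> {1..C}. build s f i j \<noteq> Some SB"
    show "\<forall>j \<in> {1..C - (m - s)}. f i j \<noteq> Some SB"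
    proof
      fix j0 assume j0: "j0 \<in> {1..C - (m - s)}"
      have "gg s j0 \<in> {1..C}" using j0 sm mC unfolding gg_def by auto
      then show "f i j0 \<noteq> Some SB" using H build_gg[OF sm ik] by metis
    qed
  next
    assume H: "\<forall>j \<in> {1..C - (m - s)}. f i j \<noteq> Some SB"
    show "\<forall>j \<in> {1..C}. build s f i j \<noteq> Some SB"
    proof
      fix j assume jC: "j \<in> {1..C}"
      show "build s f i j \<noteq> Some SB"
      proof (cases "s < j \<and> j \<le> m")
        case True then show ?thesis using build_mid[OF ik] by simp
      next
        case mid: False
        define j0 where "j0 = ginv s j"
        have j: "j = gg s j0" unfolding j0_def using gg_ginv[OF sm mid] by simp
        have "j0 \<in> {1..C - (m - s)}" using jC mid sm mC unfolding j0_def ginv_def by auto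
        then show ?thesis using H j build_gg[OF sm ik] by simp
      qed
    qed
  qed
  have rowk: "(\<forall>j \<in> {1..C}. build s f k j \<noteq> Some SB) \<longleftrightarrow> s = 0"
  proof
    assume H: "\<forall>j \<in> {1..C}. build s f k j \<noteq> Some SB"
    show "s = 0"
    proof (rule ccontr)
      assume "s \<noteq> 0"
      then have "s \<in> {1..C}" "build s f k s = Some SB" using sm mC by (auto simp: build_k rowk_def)
      then show False using H by blast
    qed
  next
    assume "s = 0" then show "\<forall>j \<in> {1..C}. build s f k j \<noteq> Some SB"
      by (auto simp: build_k rowk_def)
  qed
  have "?A = ?B \<union> (if s = 0 then {k} else {})"
  proof -
    have "?A = {i \<in> {1..k - 1}. \<forall>j \<in> {1..C}. build s f i j \<noteq> Some SB} \<union>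
               {i \<in> {k}. \<forall>j \<in> {1..C}. build s f i j \<noteq> Some SB}"
      using k1 by auto
    also have "{i \<in> {1..k - 1}. \<forall>j \<in> {1..C}. build s f i j \<noteq> Some SB} = ?B"
      apply (rule Collect_cong)
      subgoal for i using rowi[of i] k1 by (cases "i \<in> {1..k - 1}") auto
      done
    also have "{i \<in> {k}. \<forall>j \<in> {1..C}. build s f i j \<noteq> Some SB} = (if s = 0 then {k} else {})"
      using rowk by auto
    finally show ?thesis .
  qed
  moreover have "card (?B \<union> (if s = 0 then {k} else {})) = card ?B + (if s = 0 then 1 else 0)"
    using k1 by (auto simp: card_insert_if)
  ultimately show ?thesis unfolding frowA_def by simp
qed

end



lemma hmat_cong: "(\<And>j. 1 \<le> j \<Longrightarrow> j \<le> n \<Longrightarrow> c j = c' j) \<Longrightarrow> hmat n c = hmat n c'"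
  unfolding hmat_def by (rule eq_matI) auto

lemma colF0: "colF \<alpha> \<beta> \<tau> j $ 0 = 1"
  by (simp add: colF_def psi_def binom_fps_nth)

lemma colF_tau_low:
  assumes "1 \<le> j" "j < num_ones u"
  shows "colF \<alpha> \<beta> (u @ True # replicate m False) j = (1 + fps_X) ^ m * colF \<alpha> \<beta> u j"
  using assms by (simp add: colF_def lam_tau power_add algebra_simps)

lemma colF_tau_k1:
  assumes "1 \<le> num_ones u"
  shows "colF \<alpha> \<beta> (u @ True # replicate m False) (num_ones u)
     = (1 + fps_X) ^ m * Kp (1/\<alpha>) (1/\<beta>) (lam u (num_ones u))"
  using assms by (simp add: colF_def lam_tau Kp_def algebra_simps)

lemma colF_tau_k:
  "colF \<alpha> \<beta> (u @ True # replicate m False) (Suc (num_ones u)) = Kp (1/\<alpha>) (1/\<beta>) m"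
  by (simp add: colF_def lam_tau Kp_def)

lemma colF_sig_low:
  assumes "1 \<le> j" "j < num_ones u"
  shows "colF \<alpha> \<beta> (u @ replicate s False) j = (1 + fps_X) ^ s * colF \<alpha> \<beta> u j"
  using assms by (simp add: colF_def lam_rep_False power_add algebra_simps)

lemma colF_sig_k:
  assumes "1 \<le> num_ones u"
  shows "colF \<alpha> \<beta> (u @ replicate s False) (num_ones u) = Kp (1/\<alpha>) (1/\<beta>) (lam u (num_ones u) + s)"
  using assms by (simp add: colF_def lam_rep_False Kp_def lam_zero_out)

lemma det_step:
  fixes \<alpha> \<beta> :: "'a::field"
  assumes K: "1 \<le> num_ones u"
  shows "det (Amat \<alpha> \<beta> (u @ True # replicate m False))
     = (\<Sum>s=1..m. det (Amat \<alpha> \<beta> (u @ replicate s False))) + (1/\<beta>) * det (Amat \<alpha> \<beta> u)"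
proof -
  define k0 where "k0 = num_ones u - 1"
  have nu: "num_ones u = Suc k0" using K unfolding k0_def by simp
  define m' where "m' = lam u (num_ones u)"
  define Y where "Y = (1 + fps_X :: 'a fps)"
  define B where "B = (\<lambda>j. inverse (Y ^ m') * colF \<alpha> \<beta> u j)"
  have B0: "B j $ 0 = 1" if "1 \<le> j" "j \<le> k0" for j
    by (simp add: B_def colF0 Y_def Ypow0)
  have YY: "Y ^ m' * inverse (Y ^ m') = 1" unfolding Y_def by (rule Yinv)
  have YB: "Y ^ (n + m') * B j = Y ^ n * colF \<alpha> \<beta> u j" for n j
    using YY by (simp add: B_def power_add algebra_simps)
  let ?ct = "\<lambda>j. if j \<le> k0 then (1 + fps_X) ^ (m + m') * B j
             else if j = Suc k0 then (1 + fps_X) ^ m * Kp (1/\<alpha>) (1/\<beta>) m' else Kp (1/\<alpha>) (1/\<beta>) m"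
  let ?cu = "\<lambda>s j. if j \<le> k0 then (1 + fps_X) ^ (m' + s) * B j else Kp (1/\<alpha>) (1/\<beta>) (m' + s)"
  have t: "Amat \<alpha> \<beta> (u @ True # replicate m False) = hmat (Suc (Suc k0)) ?ct"
    unfolding Amat_hmat
  proof (simp add: nu, rule hmat_cong)
    fix j assume j: "1 \<le> j" "j \<le> Suc (Suc k0)"
    consider "j \<le> k0" | "j = Suc k0" | "j = Suc (Suc k0)" using j by linarith
    then show "colF \<alpha> \<beta> (u @ True # replicate m False) j = ?ct j"
    proof cases
      case 1 then show ?thesis using colF_tau_low[of j u \<alpha> \<beta> m] j nu YB[of m j]
        by (simp add: Y_def)
    next
      case 2 then show ?thesis using colF_tau_k1[of u \<alpha> \<beta> m] K nu by (simp add: m'_def)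
    next
      case 3 then show ?thesis using colF_tau_k[of \<alpha> \<beta> u m] nu by simp
    qed
  qed
  have sg: "Amat \<alpha> \<beta> (u @ replicate s False) = hmat (Suc k0) (?cu s)" for s
    unfolding Amat_hmat
  proof (simp add: nu, rule hmat_cong)
    fix j assume j: "1 \<le> j" "j \<le> Suc k0"
    show "colF \<alpha> \<beta> (u @ replicate s False) j = ?cu s j"
    proof (cases "j \<le> k0")
      case True then show ?thesis using colF_sig_low[of j u \<alpha> \<beta> s] j nu YB[of s j]
        by (simp add: Y_def add.commute)
    next
      case False
      then have "j = num_ones u" using j nu by simp
      then show ?thesis using colF_sig_k[of u \<alpha> \<beta> s] K False by (simp add: m'_def)
    qed
  qed
  have R: "det (hmat (Suc (Suc k0)) ?ct) = (\<Sum>s=1..m. det (hmat (Suc k0) (?cu s))) + (1/\<beta>) * det (hmat (Suc k0) (?cu 0))"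
    by (rule det_rec) (rule B0)
  have u0: "Amat \<alpha> \<beta> u = hmat (Suc k0) (?cu 0)" using sg[of 0] by simp
  show ?thesis unfolding t sg u0 R ..
qed

lemma fcol_A: "fcol \<tau> f = fcolA (length \<tau> - num_ones \<tau>) (num_ones \<tau>) f"
  by (simp add: fcol_def fcolA_def)
lemma frow_A: "frow \<tau> f = frowA (length \<tau> - num_ones \<tau>) (num_ones \<tau>) f"
  by (simp add: frow_def frowA_def)

lemma P_step:
  fixes \<alpha> \<beta> :: "'a::field"
  shows "Ptau \<alpha> \<beta> (u @ True # replicate m False) =
    (\<Sum>s=0..m. (\<alpha> * \<beta>) ^ (m - s + 1) * (if s = 0 then 1/\<beta> else 1) * Ptau \<alpha> \<beta> (u @ replicate s False))"
proof -
  interpret R: rr "Suc (num_ones u)" m "lam u" by unfold_locales simp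
  let ?t = "u @ True # replicate m False"
  let ?s = "\<lambda>s. u @ replicate s False"
  have Bt_eq: "is_box ?t = R.Bt"
    by (intro ext) (auto simp: is_box_def R.Bt_def lam_tau)
  have Bs_eq: "is_box (?s s) = R.Bs s" for s
    by (intro ext) (auto simp: is_box_def R.Bs_def lam_rep_False)
  have fin: "finite {f. ctab (R.Bs s) f}" for s
    using finite_tab[of "?s s"] unfolding cat_ctab Bs_eq .
  have lu: "num_ones u \<le> length u" by (rule num_ones_le)
  have C: "length ?t - num_ones ?t = length u + m - num_ones u" by simp
  have Cs: "length (?s s) - num_ones (?s s) = length u + s - num_ones u" for s by simp
  have wt_build: "wt \<alpha> \<beta> ?t (R.build s f) = (\<alpha> * \<beta>) ^ (m - s + 1) * (if s = 0 then 1/\<beta> else 1) * wt \<alpha> \<beta> (?s s) f"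
    if sm: "s \<le> m" for s f
  proof -
    have mC: "m \<le> length u + m - num_ones u" using lu by simp
    have CC: "length u + m - num_ones u - (m - s) = length u + s - num_ones u" using lu sm by simp
    have fc: "fcol ?t (R.build s f) = fcol (?s s) f"
      unfolding fcol_A C Cs using R.fcol_build[OF sm mC, of f, unfolded CC] by simp
    have fr: "frow ?t (R.build s f) = frow (?s s) f + (if s = 0 then 1 else 0)"
      unfolding frow_A C Cs using R.frow_build[OF sm mC, of f, unfolded CC] by simp
    have len: "length ?t = (m - s + 1) + length (?s s)" using sm by simp
    show ?thesis unfolding wt_def fc fr len power_add by (simp add: algebra_simps)
  qed
  have "Ptau \<alpha> \<beta> ?t = sum (wt \<alpha> \<beta> ?t) {f. ctab R.Bt f}"
    unfolding Ptau_def cat_ctab Bt_eq ..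
  also have "\<dots> = (\<Sum>s=0..m. \<Sum>f\<in>{f. ctab (R.Bs s) f}. wt \<alpha> \<beta> ?t (R.build s f))"
    by (rule R.sum_decomp[OF fin])
  also have "\<dots> = (\<Sum>s=0..m. (\<alpha> * \<beta>) ^ (m - s + 1) * (if s = 0 then 1/\<beta> else 1) * Ptau \<alpha> \<beta> (?s s))"
  proof (rule sum.cong[OF refl])
    fix s assume "s \<in> {0..m}"
    then have sm: "s \<le> m" by simp
    show "(\<Sum>f\<in>{f. ctab (R.Bs s) f}. wt \<alpha> \<beta> ?t (R.build s f)) =
        (\<alpha> * \<beta>) ^ (m - s + 1) * (if s = 0 then 1/\<beta> else 1) * Ptau \<alpha> \<beta> (?s s)"
      unfolding wt_build[OF sm] Ptau_def cat_ctab Bs_eq sum_distrib_left ..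
  qed
  finally show ?thesis .
qed

lemma det_k1:
  fixes \<alpha> \<beta> :: "'a::field"
  assumes "num_ones u = 0"
  shows "det (Amat \<alpha> \<beta> (u @ True # replicate m False)) = 1/\<beta> + (\<Sum>p=1..m. (1/\<alpha>)^p)"
proof -
  have "Amat \<alpha> \<beta> (u @ True # replicate m False) = hmat (Suc 0) (colF \<alpha> \<beta> (u @ True # replicate m False))"
    unfolding Amat_hmat using assms by simp
  moreover have "det (hmat (Suc 0) (colF \<alpha> \<beta> (u @ True # replicate m False)))
      = colF \<alpha> \<beta> (u @ True # replicate m False) 1 $ 1"
    using det_hmat_Suc[of 0 "colF \<alpha> \<beta> (u @ True # replicate m False)"] by simp
  moreover have "colF \<alpha> \<beta> (u @ True # replicate m False) 1 $ 1 = 1/\<beta> + (\<Sum>p=1..m. (1/\<alpha>)^p)"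
    unfolding colF_nth using assms by (simp add: lam_tau binz_def)
  ultimately show ?thesis by simp
qed

lemma P_zero:
  fixes \<alpha> \<beta> :: "'a::field"
  assumes a: "\<alpha> \<noteq> 0" and K: "num_ones \<tau> = 0"
  shows "Ptau \<alpha> \<beta> \<tau> = \<beta> ^ length \<tau>"
proof -
  have nb: "\<not> is_box \<tau> i j" for i j using K by (simp add: is_box_def)
  have "{f. catalan_tableau \<tau> f} = {\<lambda>i j. None}"
  proof
    show "{f. catalan_tableau \<tau> f} \<subseteq> {\<lambda>i j. None}"
      using nb by (auto simp: catalan_tableau_def intro!: ext)
    show "{\<lambda>i j. None} \<subseteq> {f. catalan_tableau \<tau> f}"
      using nb by (auto simp: catalan_tableau_def)
  qed
  moreover have "wt \<alpha> \<beta> \<tau> (\<lambda>i j. None) = \<beta> ^ length \<tau>"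
  proof -
    have e: "{j \<in> {1..length \<tau> - num_ones \<tau>}. \<forall>i\<in>{1..num_ones \<tau>}. (\<lambda>i j. None) i j \<noteq> Some SA} = {1..length \<tau>}"
      using K by auto
    have "fcol \<tau> (\<lambda>i j. None) = length \<tau>" unfolding fcol_def e by simp
    moreover have "frow \<tau> (\<lambda>i j. None) = 0" using K by (simp add: frow_def)
    ultimately show ?thesis using a by (simp add: wt_def power_mult_distrib power_one_over)
  qed
  ultimately show ?thesis by (simp add: Ptau_def)
qed

lemma main:
  fixes \<alpha> \<beta> :: "'a::field"
  assumes a: "\<alpha> \<noteq> 0" and b: "\<beta> \<noteq> 0"
  shows "num_ones \<tau> = K \<Longrightarrow> Ptau \<alpha> \<beta> \<tau> = \<alpha> ^ (K + lam \<tau> 1) * \<beta> ^ length \<tau> * det (Amat \<alpha> \<beta> \<tau>)"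
proof (induction K arbitrary: \<tau>)
  case 0
  have "Amat \<alpha> \<beta> \<tau> \<in> carrier_mat 0 0" using 0 by (simp add: Amat_def)
  then have "det (Amat \<alpha> \<beta> \<tau>) = 1" by simp
  moreover have "lam \<tau> 1 = 0" using 0 by (simp add: lam_zero_out)
  ultimately show ?case using P_zero[OF a 0] by simp
next
  case (Suc K)
  obtain u m where t: "\<tau> = u @ True # replicate m False" using decomp_word[of \<tau>] Suc.prems by auto
  have Ku: "num_ones u = K" using Suc.prems t by simp
  have IH: "Ptau \<alpha> \<beta> (u @ replicate s False) = \<alpha> ^ (K + lam (u @ replicate s False) 1) *
      \<beta> ^ (length u + s) * det (Amat \<alpha> \<beta> (u @ replicate s False))" for s
    using Suc.IH[of "u @ replicate s False"] Ku by simp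
  have step: "Ptau \<alpha> \<beta> \<tau> = (\<Sum>s=0..m. (\<alpha> * \<beta>) ^ (m - s + 1) * (if s = 0 then 1/\<beta> else 1) *
      (\<alpha> ^ (K + lam (u @ replicate s False) 1) * \<beta> ^ (length u + s) * det (Amat \<alpha> \<beta> (u @ replicate s False))))"
    unfolding t P_step IH ..
  have len: "length \<tau> = length u + 1 + m" using t by simp
  show ?case
  proof (cases "K = 0")
    case True
    have d0: "det (Amat \<alpha> \<beta> (u @ replicate s False)) = 1" for s
    proof -
      have "Amat \<alpha> \<beta> (u @ replicate s False) \<in> carrier_mat 0 0" using Ku True by (simp add: Amat_def)
      then show ?thesis by simp
    qed
    have l0: "lam (u @ replicate s False) 1 = 0" for s using Ku True by (simp add: lam_rep_False)
    have lt: "lam \<tau> 1 = m" using t Ku True by (simp add: lam_tau)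
    have trm: "(\<alpha> * \<beta>) ^ (m - s + 1) * \<beta> ^ (length u + s) = \<alpha> ^ (1 + m) * \<beta> ^ (length u + 1 + m) * (1/\<alpha>)^s"
      if "s \<le> m" for s
    proof -
      have e1: "1 + m = (m - s + 1) + s" and e2: "length u + 1 + m = (m - s + 1) + (length u + s)" using that by auto
      have "\<alpha> ^ (1 + m) * (1/\<alpha>)^s = \<alpha> ^ (m - s + 1) * (\<alpha> * (1/\<alpha>))^s"
        unfolding e1 power_add power_mult_distrib by (simp add: algebra_simps)
      also have "\<dots> = \<alpha> ^ (m - s + 1)" using a by simp
      finally have al: "\<alpha> ^ (1 + m) * (1/\<alpha>)^s = \<alpha> ^ (m - s + 1)" .
      have f1: "(\<alpha> * \<beta>) ^ (m - s + 1) * \<beta> ^ (length u + s) = \<alpha> ^ (m - s + 1) * \<beta> ^ (length u + 1 + m)"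
        unfolding e2 power_add power_mult_distrib by (simp add: algebra_simps)
      show ?thesis unfolding f1 al[symmetric] by (simp add: algebra_simps)
    qed
    have "Ptau \<alpha> \<beta> \<tau> = (\<Sum>s=0..m. (\<alpha> * \<beta>) ^ (m - s + 1) * (if s = 0 then 1/\<beta> else 1) * \<beta> ^ (length u + s))"
      unfolding step d0 l0 True by simp
    also have "\<dots> = (\<Sum>s=0..m. \<alpha> ^ (1 + m) * \<beta> ^ (length u + 1 + m) * ((if s = 0 then 1/\<beta> else 1) * (1/\<alpha>)^s))"
    proof (rule sum.cong[OF refl])
      fix s assume "s \<in> {0..m}"
      then have "s \<le> m" by simp
      have "(\<alpha> * \<beta>) ^ (m - s + 1) * (if s = 0 then 1/\<beta> else 1) * \<beta> ^ (length u + s)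
          = (if s = 0 then 1/\<beta> else 1) * ((\<alpha> * \<beta>) ^ (m - s + 1) * \<beta> ^ (length u + s))"
        by (simp only: mult_ac)
      also have "\<dots> = (if s = 0 then 1/\<beta> else 1) * (\<alpha> ^ (1 + m) * \<beta> ^ (length u + 1 + m) * (1/\<alpha>)^s)"
        unfolding trm[OF \<open>s \<le> m\<close>] ..
      finally show "(\<alpha> * \<beta>) ^ (m - s + 1) * (if s = 0 then 1/\<beta> else 1) * \<beta> ^ (length u + s)
          = \<alpha> ^ (1 + m) * \<beta> ^ (length u + 1 + m) * ((if s = 0 then 1/\<beta> else 1) * (1/\<alpha>)^s)"
        by (simp only: mult_ac)
    qed
    also have "\<dots> = \<alpha> ^ (1 + m) * \<beta> ^ (length u + 1 + m) * (\<Sum>s=0..m. (if s = 0 then 1/\<beta> else 1) * (1/\<alpha>)^s)"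
      by (simp add: sum_distrib_left)
    also have "(\<Sum>s=0..m. (if s = 0 then 1/\<beta> else 1) * (1/\<alpha>)^s) = 1/\<beta> + (\<Sum>p=1..m. (1/\<alpha>)^p)"
      by (simp add: sum.atLeast_Suc_atMost)
    finally show ?thesis using det_k1[of u \<alpha> \<beta> m] Ku True t lt len by simp
  next
    case False
    then have K1: "1 \<le> num_ones u" using Ku by simp
    have ls: "lam (u @ replicate s False) 1 = lam u 1 + s" for s using K1 by (simp add: lam_rep_False)
    have lt: "lam \<tau> 1 = lam u 1 + m" using t K1 by (simp add: lam_tau)
    define G where "G = (\<lambda>s. det (Amat \<alpha> \<beta> (u @ replicate s False)))"
    define Q where "Q = \<alpha> ^ (Suc K + lam u 1 + m) * \<beta> ^ (length u + 1 + m)"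
    have trm: "(\<alpha> * \<beta>) ^ (m - s + 1) * (\<alpha> ^ (K + (lam u 1 + s)) * \<beta> ^ (length u + s)) = Q"
      if "s \<le> m" for s
    proof -
      have e1: "Suc K + lam u 1 + m = (m - s + 1) + (K + (lam u 1 + s))"
        and e2: "length u + 1 + m = (m - s + 1) + (length u + s)" using that by auto
      show ?thesis unfolding Q_def e1 e2 power_add power_mult_distrib by (simp add: algebra_simps)
    qed
    have "Ptau \<alpha> \<beta> \<tau> = (\<Sum>s=0..m. Q * ((if s = 0 then 1/\<beta> else 1) * G s))"
      unfolding step ls G_def
      by (rule sum.cong[OF refl]) (use trm in \<open>auto simp: algebra_simps\<close>)
    also have "\<dots> = Q * (\<Sum>s=0..m. (if s = 0 then 1/\<beta> else 1) * G s)"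
      by (simp add: sum_distrib_left)
    also have "(\<Sum>s=0..m. (if s = 0 then 1/\<beta> else 1) * G s) = (\<Sum>s=1..m. G s) + 1/\<beta> * G 0"
      by (simp add: sum.atLeast_Suc_atMost)
    also have "\<dots> = det (Amat \<alpha> \<beta> \<tau>)"
      unfolding t G_def using det_step[OF K1, of \<alpha> \<beta> m] by simp
    finally show ?thesis unfolding Q_def lt len by (simp add: algebra_simps)
  qed
qed

theorem theorem1:
  fixes \<alpha> \<beta> :: "'a::field_char_0" and \<tau> :: "bool list" and n k :: nat
  assumes "\<alpha> \<noteq> 0" and "\<beta> \<noteq> 0"
    and "n \<ge> 1" and "1 \<le> k" and "k \<le> n"
    and "length \<tau> = n" and "num_ones \<tau> = k"
  shows "Ptau \<alpha> \<beta> \<tau> = \<alpha> ^ (k + lam \<tau> 1) * \<beta> ^ n * det (Amat \<alpha> \<beta> \<tau>)"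
  using main[OF assms(1,2) assms(7)] assms(6) by simp



end
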